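(* Let $\mathfrak{g}$ be a finite-dimensional indecomposable metric Lie algebra with index $r>0$ admitting a maximally isotropic centre. Then as a vector space $$\mathfrak{g} = \bigoplus_{i=1}^r \left(\mathbb{R} u_i \oplus \mathbb{R} v_i\right) \oplus E,$$ where $E$ is a euclidean (positive-definite) subspace, $u_i, v_i \perp E$, $\langle u_i,v_j\rangle= \delta_{ij}$, $\langle u_i,u_j\rangle = \langle v_i,v_j\rangle = 0$ (the $v_i$ spanning the centre). Moreover the Lie bracket is given by $$[u_i,u_j] = K_{ij} + \sum_{k=1}^r L_{ijk} v_k,\qquad [u_i,x] = J_ix - \sum_{j=1}^r \langle K_{ij},x\rangle v_j,\qquad [x,y] = - \sum_{i=1}^r \langle x, J_i y\rangle v_i$$ for all $x,y\in E$ (and the $v_i$ are central), where $K_{ij} = - K_{ji} \in E$, $L_{ijk} \in \mathbb{R}$ is totally skewsymmetric in its indices, $J_i \in \mathfrak{so}(E)$, and in addition these obey $$J_i J_j - J_j J_i = 0,\qquad J_i K_{jk} + J_j K_{ki} + J_k K_{ij} = 0,\qquad \langle K_{\ell i},K_{jk}\rangle + \langle K_{\ell j},K_{ki}\rangle + \langle K_{\ell k},K_{ij}\rangle =0$$ for all indices $i,j,k,\ell\in\{1,\dots,r\}$.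
   Context: A metric Lie algebra is a real Lie algebra with a nondegenerate symmetric bilinear form $\langle-,-\rangle$ which is ad-invariant: $\langle [x,y],z\rangle = -\langle y,[x,z]\rangle$. It is indecomposable if it is not isomorphic to an orthogonal direct sum of two metric Lie algebras of positive dimension. Its index is the dimension of a maximal negative-definite subspace. A maximally isotropic centre is a subspace $Z$ of the centre of the Lie algebra whose dimension equals the index and on which the inner product vanishes identically. $\mathfrak{so}(E)$ denotes the skewsymmetric endomorphisms of the euclidean space $E$. *)

theory Defs
  imports "HOL-Analysis.Analysis"
begin

text \<open>A finite-dimensional real Lie algebra is modelled on a type 'a of class
euclidean_space (any finite-dimensional real vector space); the inner product of
that class is NOT used, the metric is the separate bilinear form B.\<close>

definition lie_algebra :: "('a::real_vector \<Rightarrow> 'a \<Rightarrow> 'a) \<Rightarrow> bool" where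
  "lie_algebra br \<longleftrightarrow> bilinear br \<and> (\<forall>x. br x x = 0) \<and>
     (\<forall>x y z. br x (br y z) + br y (br z x) + br z (br x y) = 0)"

definition metric_lie_algebra ::
  "('a::real_vector \<Rightarrow> 'a \<Rightarrow> 'a) \<Rightarrow> ('a \<Rightarrow> 'a \<Rightarrow> real) \<Rightarrow> bool" where
  "metric_lie_algebra br B \<longleftrightarrow> lie_algebra br \<and> bilinear B \<and>
     (\<forall>x y. B x y = B y x) \<and>
     (\<forall>x. (\<forall>y. B x y = 0) \<longrightarrow> x = 0) \<and>
     (\<forall>x y z. B (br x y) z = - B y (br x z))"

definition lie_ideal :: "('a::real_vector \<Rightarrow> 'a \<Rightarrow> 'a) \<Rightarrow> 'a set \<Rightarrow> bool" where
  "lie_ideal br I \<longleftrightarrow> subspace I \<and> (\<forall>x y. y \<in> I \<longrightarrow> br x y \<in> I)"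

text \<open>Decomposable: orthogonal direct sum of two nonzero ideals (equivalently,
isomorphic to an orthogonal direct sum of two metric Lie algebras of positive dimension).\<close>
definition decomposable ::
  "('a::real_vector \<Rightarrow> 'a \<Rightarrow> 'a) \<Rightarrow> ('a \<Rightarrow> 'a \<Rightarrow> real) \<Rightarrow> bool" where
  "decomposable br B \<longleftrightarrow> (\<exists>I J. lie_ideal br I \<and> lie_ideal br J \<and>
     I \<noteq> {0} \<and> J \<noteq> {0} \<and> I \<inter> J = {0} \<and>
     (\<forall>x. \<exists>a\<in>I. \<exists>b\<in>J. x = a + b) \<and> (\<forall>a\<in>I. \<forall>b\<in>J. B a b = 0))"

definition indecomposable ::
  "('a::real_vector \<Rightarrow> 'a \<Rightarrow> 'a) \<Rightarrow> ('a \<Rightarrow> 'a \<Rightarrow> real) \<Rightarrow> bool" where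
  "indecomposable br B \<longleftrightarrow> \<not> decomposable br B"

definition neg_definite_on :: "('a::real_vector \<Rightarrow> 'a \<Rightarrow> real) \<Rightarrow> 'a set \<Rightarrow> bool" where
  "neg_definite_on B W \<longleftrightarrow> (\<forall>w\<in>W. w \<noteq> 0 \<longrightarrow> B w w < 0)"

definition pos_definite_on :: "('a::real_vector \<Rightarrow> 'a \<Rightarrow> real) \<Rightarrow> 'a set \<Rightarrow> bool" where
  "pos_definite_on B W \<longleftrightarrow> (\<forall>w\<in>W. w \<noteq> 0 \<longrightarrow> B w w > 0)"

definition form_index :: "('a::euclidean_space \<Rightarrow> 'a \<Rightarrow> real) \<Rightarrow> nat" where
  "form_index B = Max {dim W | W. subspace W \<and> neg_definite_on B W}"

definition lie_centre :: "('a::real_vector \<Rightarrow> 'a \<Rightarrow> 'a) \<Rightarrow> 'a set" where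
  "lie_centre br = {z. \<forall>x. br z x = 0}"

definition max_isotropic_centre ::
  "('a::euclidean_space \<Rightarrow> 'a \<Rightarrow> 'a) \<Rightarrow> ('a \<Rightarrow> 'a \<Rightarrow> real) \<Rightarrow> 'a set \<Rightarrow> bool" where
  "max_isotropic_centre br B Z \<longleftrightarrow> subspace Z \<and> Z \<subseteq> lie_centre br \<and>
     dim Z = form_index B \<and> (\<forall>x\<in>Z. \<forall>y\<in>Z. B x y = 0)"

end

theory Submission imports Defs begin

lemma quad_min:
  fixes N :: "'b::real_vector \<Rightarrow> 'b \<Rightarrow> real"
  assumes bil: "bilinear N" and sym: "\<And>x y. N x y = N y x" and psd: "\<And>x. N x x \<ge> 0"
    and fin: "finite S"
  shows "\<And>\<phi> \<kappa>. linear \<phi> \<Longrightarrow> (\<forall>c. \<kappa> - 2 * \<phi> c + N c c \<ge> 0) \<Longrightarrow> \<exists>c\<in>span S. \<forall>y\<in>span S. N c y = \<phi> y"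
  using fin
proof (induction S rule: finite_induct)
  have l1: "linear (\<lambda>x. N x y)" and l2: "linear (\<lambda>y. N x y)" for x y using bil by (simp_all add: bilinear_def)
  note Ns[simp] = linear_add[OF l1] linear_add[OF l2] linear_diff[OF l1] linear_diff[OF l2]
    linear_scale[OF l1] linear_scale[OF l2] linear_0[OF l1] linear_0[OF l2]
  case empty
  then show ?case by (intro bexI[of _ 0]) (auto simp: linear_0)
next
  have l1: "linear (\<lambda>x. N x y)" and l2: "linear (\<lambda>y. N x y)" for x y using bil by (simp_all add: bilinear_def)
  note Ns[simp] = linear_add[OF l1] linear_add[OF l2] linear_diff[OF l1] linear_diff[OF l2]
    linear_scale[OF l1] linear_scale[OF l2] linear_0[OF l1] linear_0[OF l2]
  case (insert a S \<phi> \<kappa>)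
  note phl[simp] = linear_add[OF insert.prems(1)] linear_diff[OF insert.prems(1)] linear_scale[OF insert.prems(1)]
  obtain c0 where c0: "c0 \<in> span S" "\<forall>y\<in>span S. N c0 y = \<phi> y" using insert.IH insert.prems by blast
  have "\<forall>c. N a a - 2 * N a c + N c c \<ge> 0"
  proof
    fix c
    have "N (a - c) (a - c) \<ge> 0" by (rule psd)
    then show "N a a - 2 * N a c + N c c \<ge> 0" using sym[of c a] by simp
  qed
  then obtain d where d: "d \<in> span S" "\<forall>y\<in>span S. N d y = N a y"
    using insert.IH[of "\<lambda>y. N a y" "N a a"] l2 by blast
  define a' where "a' = a - d"
  have a'S: "N a' y = 0" if "y \<in> span S" for y using d that by (simp add: a'_def)
  have a'a: "N a' a = N a' a'" using a'S[OF d(1)] by (simp add: a'_def)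
  have c0a: "N c0 a = N c0 a' + \<phi> d" using c0 d(1) by (simp add: a'_def)
  have pa: "\<phi> a = \<phi> a' + \<phi> d" by (simp add: a'_def)
  have a'span: "a' \<in> span (insert a S)" unfolding a'_def
    using d(1) span_mono[of S "insert a S"] by (intro span_diff) (auto intro: span_base)
  have c0span: "c0 \<in> span (insert a S)" using c0(1) span_mono[of S "insert a S"] by auto
  define c where "c = (if N a' a' = 0 then c0 else c0 + ((\<phi> a - N c0 a) / N a' a') *\<^sub>R a')"
  have cS: "N c y = \<phi> y" if "y \<in> span S" for y
    using c0 that a'S by (simp add: c_def)
  have ca: "N c a = \<phi> a"
  proof (cases "N a' a' = 0")
    case True
    define A where "A = \<kappa> - 2 * \<phi> c0 + N c0 c0"
    define \<beta> where "\<beta> = N c0 a' - \<phi> a'"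
    have ft: "A + 2 * t * \<beta> \<ge> 0" for t
    proof -
      have "\<kappa> - 2 * \<phi> (c0 + t *\<^sub>R a') + N (c0 + t *\<^sub>R a') (c0 + t *\<^sub>R a') \<ge> 0"
        using insert.prems(2) by blast
      then show ?thesis using True sym[of a' c0] by (simp add: A_def \<beta>_def algebra_simps)
    qed
    have "\<beta> = 0"
    proof (rule ccontr)
      assume "\<beta> \<noteq> 0"
      have "A + 2 * (- (A + 1) / (2 * \<beta>)) * \<beta> = -1" using \<open>\<beta> \<noteq> 0\<close> by (simp add: field_simps)
      then show False using ft[of "- (A + 1) / (2 * \<beta>)"] by simp
    qed
    then show ?thesis using True c0a pa by (simp add: c_def \<beta>_def)
  next
    case False
    then show ?thesis using a'a by (simp add: c_def field_simps)
  qed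
  have cspan: "c \<in> span (insert a S)" using a'span c0span by (simp add: c_def span_add span_scale)
  show ?case
  proof (intro bexI[OF _ cspan] ballI)
    fix y assume "y \<in> span (insert a S)"
    then obtain t where t: "y - t *\<^sub>R a \<in> span S" using span_insert[of a S] by auto
    have "N c y = N c (y - t *\<^sub>R a) + t * N c a" by simp
    also have "\<dots> = \<phi> (y - t *\<^sub>R a) + t * \<phi> a" using cS[OF t] ca by simp
    also have "\<dots> = \<phi> y" by simp
    finally show "N c y = \<phi> y" .
  qed
qed


locale mla =
  fixes br :: "'a::euclidean_space \<Rightarrow> 'a \<Rightarrow> 'a" and B :: "'a \<Rightarrow> 'a \<Rightarrow> real"
  assumes mla: "metric_lie_algebra br B"
begin

lemma bilB: "bilinear B" using mla by (simp add: metric_lie_algebra_def)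
lemma bilbr: "bilinear br" using mla by (simp add: metric_lie_algebra_def lie_algebra_def)
lemma Bsym: "B x y = B y x" using mla unfolding metric_lie_algebra_def by blast
lemma nondeg: "(\<And>y. B x y = 0) \<Longrightarrow> x = 0" using mla by (auto simp add: metric_lie_algebra_def)
lemma inv: "B (br x y) z = - B y (br x z)" using mla unfolding metric_lie_algebra_def by blast
lemma alt[simp]: "br x x = 0" using mla by (simp add: metric_lie_algebra_def lie_algebra_def)
lemma jac: "br x (br y z) + br y (br z x) + br z (br x y) = 0"
  using mla by (simp add: metric_lie_algebra_def lie_algebra_def)

lemma linBl: "linear (\<lambda>x. B x y)" using bilB by (simp add: bilinear_def)
lemma linBr: "linear (\<lambda>y. B x y)" using bilB by (simp add: bilinear_def)
lemma linbrl: "linear (\<lambda>x. br x y)" using bilbr by (simp add: bilinear_def)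
lemma linbrr: "linear (\<lambda>y. br x y)" using bilbr by (simp add: bilinear_def)

lemma B_simps[simp]:
  "B (x + y) z = B x z + B y z" "B z (x + y) = B z x + B z y"
  "B (x - y) z = B x z - B y z" "B z (x - y) = B z x - B z y"
  "B (c *\<^sub>R x) z = c * B x z" "B z (c *\<^sub>R x) = c * B z x"
  "B (- x) z = - B x z" "B z (- x) = - B z x"
  "B 0 z = 0" "B z 0 = 0"
  "B (sum f A) z = (\<Sum>i\<in>A. B (f i) z)" "B z (sum f A) = (\<Sum>i\<in>A. B z (f i))"
  using linear_add[OF linBl] linear_add[OF linBr] linear_diff[OF linBl] linear_diff[OF linBr]
    linear_scale[OF linBl] linear_scale[OF linBr] linear_neg[OF linBl] linear_neg[OF linBr]
    linear_0[OF linBl] linear_0[OF linBr] linear_sum[OF linBl] linear_sum[OF linBr]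
  by auto

lemma br_simps[simp]:
  "br (x + y) z = br x z + br y z" "br z (x + y) = br z x + br z y"
  "br (x - y) z = br x z - br y z" "br z (x - y) = br z x - br z y"
  "br (c *\<^sub>R x) z = c *\<^sub>R br x z" "br z (c *\<^sub>R x) = c *\<^sub>R br z x"
  "br (- x) z = - br x z" "br z (- x) = - br z x"
  "br 0 z = 0" "br z 0 = 0"
  "br (sum f A) z = (\<Sum>i\<in>A. br (f i) z)" "br z (sum f A) = (\<Sum>i\<in>A. br z (f i))"
  using linear_add[OF linbrl] linear_add[OF linbrr] linear_diff[OF linbrl] linear_diff[OF linbrr]
    linear_scale[OF linbrl] linear_scale[OF linbrr] linear_neg[OF linbrl] linear_neg[OF linbrr]
    linear_0[OF linbrl] linear_0[OF linbrr] linear_sum[OF linbrl] linear_sum[OF linbrr]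
  by auto

lemma anti: "br x y = - br y x"
proof -
  have "br x y + br y x = br (x+y) (x+y)" by (simp del: alt) (simp add: algebra_simps)
  then have "br x y + br y x = 0" by simp
  then show ?thesis by (simp add: eq_neg_iff_add_eq_0)
qed

lemma jac2: "br x (br y z) = br (br x y) z + br y (br x z)"
proof -
  have "br x (br y z) + br y (br z x) + br z (br x y) = 0" by (rule jac)
  moreover have "br y (br z x) = - br y (br x z)" by (metis anti br_simps(8))
  moreover have "br z (br x y) = - br (br x y) z" by (metis anti)
  ultimately have "br x (br y z) - br y (br x z) - br (br x y) z = 0" by (simp add: algebra_simps)
  then show ?thesis by (simp add: algebra_simps)
qed

lemma inv2: "B x (br y z) = - B (br y x) z"
  using inv[of y x z] Bsym[of x "br y z"] by simp

lemma sum_delta_lt: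
  fixes g :: "nat \<Rightarrow> 'b::comm_monoid_add"
  assumes "j < k" "\<forall>i<k. g i = (if i = j then a else 0)"
  shows "(\<Sum>i<k. g i) = a"
proof -
  have "(\<Sum>i<k. g i) = (\<Sum>i<k. if i = j then a else 0)" using assms(2) by (intro sum.cong) auto
  then show ?thesis using assms(1) by simp
qed

lemma riesz:
  assumes "linear g" shows "\<exists>x. \<forall>y. B x y = g y"
proof -
  define M where "M x = (\<Sum>b\<in>Basis. B x b *\<^sub>R b)" for x
  have linM: "linear M" unfolding M_def
    by (rule linearI) (simp_all add: scaleR_sum_right sum.distrib algebra_simps)
  have Mb: "M x \<bullet> b = B x b" if "b \<in> Basis" for x b
    using that by (simp add: M_def inner_sum_left inner_Basis if_distrib cong: if_cong)
  have BM: "B x y = M x \<bullet> y" for x y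
  proof -
    have "B x y = B x (\<Sum>b\<in>Basis. (y \<bullet> b) *\<^sub>R b)" by (simp add: euclidean_representation)
    also have "\<dots> = (\<Sum>b\<in>Basis. (y \<bullet> b) * B x b)" by simp
    also have "\<dots> = M x \<bullet> y"
      by (simp add: M_def inner_sum_left inner_sum_right mult.commute inner_commute)
    finally show ?thesis .
  qed
  have "inj M"
  proof (rule injI)
    fix x y assume "M x = M y"
    then have "M (x - y) = 0" using linear_diff[OF linM] by simp
    then have "\<forall>z. B (x - y) z = 0" using BM by simp
    then have "x - y = 0" using nondeg by blast
    then show "x = y" by simp
  qed
  then have "surj M" using linear_injective_imp_surjective[OF linM] by simp
  define a where "a = (\<Sum>b\<in>Basis. g b *\<^sub>R b)"
  obtain x where x: "M x = a" using \<open>surj M\<close> by (metis surjD)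
  have "B x y = g y" for y
  proof -
    have "g y = g (\<Sum>b\<in>Basis. (y \<bullet> b) *\<^sub>R b)" by (simp add: euclidean_representation)
    also have "\<dots> = (\<Sum>b\<in>Basis. (y \<bullet> b) * g b)"
      by (simp add: linear_sum[OF assms] linear_scale[OF assms])
    also have "\<dots> = a \<bullet> y" by (simp add: a_def inner_sum_left inner_sum_right mult.commute inner_commute)
    finally show ?thesis using BM x by simp
  qed
  then show ?thesis by blast
qed


lemma dual_family:
  fixes v :: "nat \<Rightarrow> 'a"
  assumes inj: "inj_on v {..<k}" and ind: "independent (v ` {..<k})"
    and iso: "\<forall>i<k. \<forall>j<k. B (v i) (v j) = 0"
  shows "\<exists>u. \<forall>i<k. \<forall>j<k. B (u i) (v j) = (if i = j then 1 else 0) \<and> B (u i) (u j) = 0"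
proof -
  have "\<forall>i. \<exists>w. i < k \<longrightarrow> (\<forall>j<k. B w (v j) = (if i = j then 1 else 0))"
  proof
    fix i
    show "\<exists>w. i < k \<longrightarrow> (\<forall>j<k. B w (v j) = (if i = j then 1 else 0))"
    proof (cases "i < k")
      case True
      obtain g where g: "linear g" "\<forall>x\<in>v ` {..<k}. g x = (if x = v i then 1 else (0::real))"
        using linear_independent_extend[OF ind, of "\<lambda>x. if x = v i then 1 else (0::real)"] by blast
      obtain w where w: "\<forall>y. B w y = g y" using riesz[OF g(1)] by blast
      have "\<forall>j<k. B w (v j) = (if i = j then 1 else 0)"
      proof (intro allI impI)
        fix j assume "j < k"
        then have "g (v j) = (if v j = v i then 1 else 0)" using g(2) by auto
        also have "\<dots> = (if i = j then 1 else 0)" using inj True \<open>j<k\<close> by (simp add: inj_on_eq_iff)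
        finally show "B w (v j) = (if i = j then 1 else 0)" using w by simp
      qed
      then show ?thesis by blast
    qed simp
  qed
  then obtain w where w: "\<And>i j. i < k \<Longrightarrow> j < k \<Longrightarrow> B (w i) (v j) = (if i = j then 1 else 0)"
    by metis
  define u where "u i = w i - (1/2) *\<^sub>R (\<Sum>l<k. B (w i) (w l) *\<^sub>R v l)" for i
  have uv: "B (u i) (v j) = (if i = j then 1 else 0)" if "i<k" "j<k" for i j
    using that iso by (simp add: u_def w)
  have "B (u i) (u j) = 0" if "i<k" "j<k" for i j
  proof -
    have s1: "(\<Sum>l<k. B (w j) (w l) * B (w i) (v l)) = B (w j) (w i)"
    proof -
      have "(\<Sum>l<k. B (w j) (w l) * B (w i) (v l)) = (\<Sum>l<k. if l = i then B (w j) (w i) else 0)"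
        by (rule sum.cong) (auto simp: w that)
      then show ?thesis using that by simp
    qed
    have s2: "(\<Sum>l<k. B (w i) (w l) * B (v l) (w j)) = B (w i) (w j)"
    proof -
      have "(\<Sum>l<k. B (w i) (w l) * B (v l) (w j)) = (\<Sum>l<k. if l = j then B (w i) (w j) else 0)"
        by (rule sum.cong) (auto simp: w that Bsym[of "v _" "w j"])
      then show ?thesis using that by simp
    qed
    have s3: "(\<Sum>l<k. B (w i) (w l) * (\<Sum>m<k. B (w j) (w m) * B (v l) (v m))) = 0"
      using iso by simp
    show ?thesis unfolding u_def using s1 s2 s3 Bsym[of "w i" "w j"] iso
      by (simp add: sum_distrib_left sum_subtractf algebra_simps)
  qed
  then show ?thesis using uv by blast
qed


lemma family_indep:
  fixes w p :: "nat \<Rightarrow> 'a"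
  assumes dual: "\<forall>i<k. \<forall>j<k. B (w i) (p j) = (if i = j then 1 else 0)"
  shows "\<And>c. (\<Sum>i<k. c i *\<^sub>R w i) = 0 \<Longrightarrow> \<forall>i<k. c i = 0"
    and "inj_on w {..<k}" and "independent (w ` {..<k})"
    and "card (w ` {..<k}) = k" and "dim (span (w ` {..<k})) = k"
proof -
  show z: "\<forall>i<k. c i = 0" if "(\<Sum>i<k. c i *\<^sub>R w i) = 0" for c
  proof (intro allI impI)
    fix j assume "j < k"
    have "0 = B (\<Sum>i<k. c i *\<^sub>R w i) (p j)" using that by simp
    also have "\<dots> = c j" apply simp apply (rule sum_delta_lt) using dual \<open>j<k\<close> by auto
    finally show "c j = 0" by simp
  qed
  show inj: "inj_on w {..<k}"
  proof (rule inj_onI)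
    fix i j assume "i \<in> {..<k}" "j \<in> {..<k}" "w i = w j"
    then have "B (w i) (p j) = B (w j) (p j)" by simp
    then show "i = j" using dual \<open>i \<in> {..<k}\<close> \<open>j \<in> {..<k}\<close> by (auto split: if_splits)
  qed
  show ind: "independent (w ` {..<k})"
  proof (rule independent_if_scalars_zero)
    show "finite (w ` {..<k})" by simp
    fix f x assume f: "(\<Sum>x\<in>w ` {..<k}. f x *\<^sub>R x) = 0" and x: "x \<in> w ` {..<k}"
    have "(\<Sum>i<k. f (w i) *\<^sub>R w i) = 0" using f by (simp add: sum.reindex[OF inj])
    then have "\<forall>i<k. f (w i) = 0" by (rule z)
    then show "f x = 0" using x by auto
  qed
  show "card (w ` {..<k}) = k" using card_image[OF inj] by simp
  then show "dim (span (w ` {..<k})) = k" using dim_span_eq_card_independent[OF ind] by simp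
qed

lemma span_family:
  fixes w :: "nat \<Rightarrow> 'a"
  assumes "inj_on w {..<k}" "x \<in> span (w ` {..<k})"
  shows "\<exists>c. x = (\<Sum>i<k. c i *\<^sub>R w i)"
proof -
  obtain f where "x = (\<Sum>y\<in>w ` {..<k}. f y *\<^sub>R y)" using assms(2) span_finite[of "w ` {..<k}"] by auto
  then have "x = (\<Sum>i<k. f (w i) *\<^sub>R w i)" by (simp add: sum.reindex[OF assms(1)])
  show ?thesis apply (rule exI[of _ "\<lambda>i. f (w i)"]) using \<open>x = (\<Sum>i<k. f (w i) *\<^sub>R w i)\<close> by simp
qed



lemma index_bound:
  assumes "subspace W" "neg_definite_on B W" shows "dim W \<le> form_index B"
proof -
  have "{dim W | W. subspace W \<and> neg_definite_on B W} \<subseteq> {..DIM('a)}"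
    using dim_subset_UNIV by auto
  then have "finite {dim W | W. subspace W \<and> neg_definite_on B W}" using finite_subset by blast
  then show ?thesis unfolding form_index_def using assms by (intro Max_ge) auto
qed


lemma hyperbolic_bound:
  fixes u v :: "nat \<Rightarrow> 'a"
  assumes uv: "\<forall>i<k. \<forall>j<k. B (u i) (v j) = (if i = j then 1 else 0) \<and> B (u i) (u j) = 0 \<and> B (v i) (v j) = 0"
  shows "k \<le> form_index B"
proof -
  define w where "w i = u i - v i" for i
  have dual: "\<forall>i<k. \<forall>j<k. B (w i) (v j) = (if i = j then 1 else 0)" using uv by (simp add: w_def)
  have ww: "B (w i) (w j) = (if i = j then -2 else 0)" if "i<k" "j<k" for i j
    using uv that Bsym[of "v i" "u j"] by (simp add: w_def)
  note fi = family_indep[OF dual]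
  have "neg_definite_on B (span (w ` {..<k}))"
    unfolding neg_definite_on_def
  proof (intro ballI impI)
    fix x assume x: "x \<in> span (w ` {..<k})" "x \<noteq> 0"
    obtain c where c: "x = (\<Sum>i<k. c i *\<^sub>R w i)" using span_family[OF fi(2) x(1)] by blast
    have "\<exists>i<k. c i \<noteq> 0"
    proof (rule ccontr)
      assume "\<not> (\<exists>i<k. c i \<noteq> 0)"
      then have "x = 0" using c by simp
      then show False using x(2) by simp
    qed
    then obtain i0 where i0: "i0 < k" "c i0 \<noteq> 0" by blast
    have "B x x = (\<Sum>i<k. c i * (\<Sum>j<k. c j * B (w j) (w i)))" by (simp add: c sum_distrib_left)
    also have "\<dots> = (\<Sum>i<k. -2 * (c i)^2)"
    proof (intro sum.cong refl)
      fix i assume i: "i \<in> {..<k}"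
      have "(\<Sum>j<k. c j * B (w j) (w i)) = -2 * c i"
        by (rule sum_delta_lt) (use i ww in auto)
      then show "c i * (\<Sum>j<k. c j * B (w j) (w i)) = -2 * (c i)^2" by (simp add: power2_eq_square)
    qed
    also have "\<dots> = -2 * (\<Sum>i<k. (c i)^2)" by (simp add: sum_distrib_left)
    also have "\<dots> < 0"
    proof -
      have "(\<Sum>i<k. (c i)^2) \<ge> (c i0)^2" using i0 by (intro member_le_sum) auto
      moreover have "(c i0)^2 > 0" using i0 by simp
      ultimately have "(\<Sum>i<k. (c i)^2) > 0" by linarith
      then show ?thesis by simp
    qed
    finally show "B x x < 0" .
  qed
  then have "dim (span (w ` {..<k})) \<le> form_index B" by (intro index_bound) auto
  then show ?thesis using fi(5) by simp
qed


lemma isotropic_bound: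
  assumes "subspace W" "\<forall>x\<in>W. \<forall>y\<in>W. B x y = 0" shows "dim W \<le> form_index B"
proof -
  obtain b where b: "b \<subseteq> W" "independent b" "W \<subseteq> span b" "card b = dim W" using basis_exists[of W] by blast
  have "finite b" using b(2) by (simp add: independent_imp_finite)
  then obtain n :: nat and v :: "nat \<Rightarrow> 'a" where nv: "b = v ` {i. i < n}" "inj_on v {i. i < n}"
    using finite_imp_nat_seg_image_inj_on by blast
  have lt: "{i. i < n} = {..<n}" by auto
  have n: "n = dim W" using b(4) nv(1) card_image[OF nv(2)] by simp
  have inj: "inj_on v {..<n}" using nv(2) lt by simp
  have ind: "independent (v ` {..<n})" using b(2) nv(1) lt by simp
  have vW: "v i \<in> W" if "i < n" for i using b(1) nv(1) that by auto
  have iso: "\<forall>i<n. \<forall>j<n. B (v i) (v j) = 0" using assms(2) vW by blast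
  obtain u where u: "\<forall>i<n. \<forall>j<n. B (u i) (v j) = (if i = j then 1 else 0) \<and> B (u i) (u j) = 0"
    using dual_family[OF inj ind iso] by blast
  have "n \<le> form_index B" using u iso by (intro hyperbolic_bound[of n u v]) auto
  then show ?thesis using n by simp
qed


lemma lin0_span:
  assumes "linear h" "x \<in> span S" "\<And>b. b \<in> S \<Longrightarrow> h b = 0"
  shows "h x = 0"
  using linear_eq_on[OF assms(1) linear_zero assms(2)] assms(3) by simp

lemma B_span0: "y \<in> span S \<Longrightarrow> (\<And>f. f \<in> S \<Longrightarrow> B z f = 0) \<Longrightarrow> B z y = 0"
  by (rule lin0_span[OF linBr]) auto

lemma onb_exists:
  assumes "subspace W" "pos_definite_on B W"
  shows "\<exists>Q. finite Q \<and> Q \<subseteq> W \<and> W \<subseteq> span Q \<and> (\<forall>e\<in>Q. B e e = 1) \<and>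
     (\<forall>e\<in>Q. \<forall>f\<in>Q. e \<noteq> f \<longrightarrow> B e f = 0)"
proof -
  have "\<forall>W. subspace W \<and> pos_definite_on B W \<and> dim W = n \<longrightarrow> (\<exists>Q. finite Q \<and> Q \<subseteq> W \<and> W \<subseteq> span Q \<and> (\<forall>e\<in>Q. B e e = 1) \<and>
     (\<forall>e\<in>Q. \<forall>f\<in>Q. e \<noteq> f \<longrightarrow> B e f = 0))" for n
  proof (induction n rule: less_induct)
    case (less n)
    show ?case
    proof (intro allI impI, elim conjE)
      fix W assume W: "subspace W" "pos_definite_on B W" "dim W = n"
      show "\<exists>Q. finite Q \<and> Q \<subseteq> W \<and> W \<subseteq> span Q \<and> (\<forall>e\<in>Q. B e e = 1) \<and>
         (\<forall>e\<in>Q. \<forall>f\<in>Q. e \<noteq> f \<longrightarrow> B e f = 0)"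
      proof (cases "W \<subseteq> {0}")
        case True then show ?thesis by (intro exI[of _ "{}"]) (auto simp: span_zero)
      next
        case False
        then obtain e0 where e0: "e0 \<in> W" "e0 \<noteq> 0" by auto
        have pe: "B e0 e0 > 0" using W(2) e0 unfolding pos_definite_on_def by auto
        define e where "e = (1 / sqrt (B e0 e0)) *\<^sub>R e0"
        have eW: "e \<in> W" using W(1) e0(1) by (simp add: e_def subspace_scale)
        have ee: "B e e = 1" using pe by (simp add: e_def)
        define W' where "W' = {x \<in> W. B x e = 0}"
        have sW': "subspace W'" using W(1) unfolding W'_def subspace_def by auto
        have pW': "pos_definite_on B W'" using W(2) unfolding W'_def pos_definite_on_def by auto
        have "e \<notin> W'" using ee unfolding W'_def by auto
        then have "W' \<subset> W" using eW unfolding W'_def by blast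
        moreover have "span W' = W'" "span W = W" using sW' W(1) by (simp_all add: span_eq_iff)
        ultimately have "span W' \<subset> span W" by (simp only:)
        then have "dim W' < n" using dim_psubset[OF \<open>span W' \<subset> span W\<close>] W(3) by simp
        then have "\<exists>Q. finite Q \<and> Q \<subseteq> W' \<and> W' \<subseteq> span Q \<and> (\<forall>e\<in>Q. B e e = 1) \<and>
           (\<forall>e\<in>Q. \<forall>f\<in>Q. e \<noteq> f \<longrightarrow> B e f = 0)"
          using less.IH[OF \<open>dim W' < n\<close>, THEN spec[of _ W']] sW' pW' by simp
        then obtain Q' where Q': "finite Q'" "Q' \<subseteq> W'" "W' \<subseteq> span Q'" "\<forall>e\<in>Q'. B e e = 1"
           "\<forall>e\<in>Q'. \<forall>f\<in>Q'. e \<noteq> f \<longrightarrow> B e f = 0" by blast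
        have eO': "e \<notin> Q'" using Q'(2) ee unfolding W'_def by auto
        have oe: "B f e = 0" "B e f = 0" if "f \<in> Q'" for f
          using Q'(2) that Bsym[of e f] unfolding W'_def by auto
        show ?thesis
        proof (intro exI[of _ "insert e Q'"] conjI)
          show "finite (insert e Q')" using Q'(1) by simp
          show "insert e Q' \<subseteq> W" using eW Q'(2) unfolding W'_def by auto
          show "W \<subseteq> span (insert e Q')"
          proof
            fix x assume x: "x \<in> W"
            have "x - B x e *\<^sub>R e \<in> W'" unfolding W'_def using x eW W(1) ee
              by (simp add: subspace_diff subspace_scale)
            then have "x - B x e *\<^sub>R e \<in> span (insert e Q')"
              using Q'(3) span_mono[of Q' "insert e Q'"] by auto
            moreover have "B x e *\<^sub>R e \<in> span (insert e Q')" by (simp add: span_base span_scale)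
            ultimately have "(x - B x e *\<^sub>R e) + B x e *\<^sub>R e \<in> span (insert e Q')" by (rule span_add)
            then show "x \<in> span (insert e Q')" by simp
          qed
          show "\<forall>f\<in>insert e Q'. B f f = 1" using ee Q'(4) by auto
          show "\<forall>f\<in>insert e Q'. \<forall>g\<in>insert e Q'. f \<noteq> g \<longrightarrow> B f g = 0"
            using Q'(5) oe by auto
        qed
      qed
    qed
  qed
  from this[of "dim W", THEN spec[of _ W]] show ?thesis using assms by simp
qed

lemma onb_proj:
  assumes Q: "finite Q" "Q \<subseteq> W" "W \<subseteq> span Q" "subspace W" "\<forall>e\<in>Q. B e e = 1"
     "\<forall>e\<in>Q. \<forall>f\<in>Q. e \<noteq> f \<longrightarrow> B e f = 0"
  shows "(\<Sum>e\<in>Q. B x e *\<^sub>R e) \<in> W"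
    and "y \<in> W \<Longrightarrow> B (x - (\<Sum>e\<in>Q. B x e *\<^sub>R e)) y = 0"
    and "pos_definite_on B W \<Longrightarrow> x \<in> W \<Longrightarrow> (\<Sum>e\<in>Q. B x e *\<^sub>R e) = x"
proof -
  show pW: "(\<Sum>e\<in>Q. B x e *\<^sub>R e) \<in> W" for x
    by (rule subspace_sum[OF Q(4)]) (use Q(2) in \<open>auto intro: subspace_scale[OF Q(4)]\<close>)
  have ff: "B (x - (\<Sum>e\<in>Q. B x e *\<^sub>R e)) f = 0" if "f \<in> Q" for x f
  proof -
    have h: "(\<Sum>e\<in>Q. B x e * B e f) = (\<Sum>e\<in>Q. if e = f then B x f else 0)"
    proof (rule sum.cong[OF refl])
      fix e assume "e \<in> Q"
      then show "B x e * B e f = (if e = f then B x f else 0)"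
        using Q(5,6) that by (cases "e = f") auto
    qed
    have "B (x - (\<Sum>e\<in>Q. B x e *\<^sub>R e)) f = B x f - (\<Sum>e\<in>Q. B x e * B e f)" by simp
    also have "\<dots> = 0" unfolding h using Q(1) that by simp
    finally show ?thesis .
  qed
  show orth: "B (x - (\<Sum>e\<in>Q. B x e *\<^sub>R e)) y = 0" if "y \<in> W" for x y
    by (rule B_span0[of y Q]) (use that Q(3) in blast, erule ff)
  assume pd: "pos_definite_on B W" and x: "x \<in> W"
  have inW: "x - (\<Sum>e\<in>Q. B x e *\<^sub>R e) \<in> W" using x pW[of x] Q(4) by (simp add: subspace_diff)
  have z: "B (x - (\<Sum>e\<in>Q. B x e *\<^sub>R e)) (x - (\<Sum>e\<in>Q. B x e *\<^sub>R e)) = 0"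
    by (rule orth[OF inW])
  have "x - (\<Sum>e\<in>Q. B x e *\<^sub>R e) = 0"
  proof (rule ccontr)
    assume "x - (\<Sum>e\<in>Q. B x e *\<^sub>R e) \<noteq> 0"
    then have "B (x - (\<Sum>e\<in>Q. B x e *\<^sub>R e)) (x - (\<Sum>e\<in>Q. B x e *\<^sub>R e)) > 0"
      using pd inW unfolding pos_definite_on_def by blast
    then show False using z by simp
  qed
  then show "(\<Sum>e\<in>Q. B x e *\<^sub>R e) = x" by simp
qed


lemma diag_bound:
  fixes w p :: "nat \<Rightarrow> 'a" and d :: "nat \<Rightarrow> real"
  assumes dual: "\<forall>i<k. \<forall>j<k. B (w i) (p j) = (if i = j then 1 else 0)"
    and ww: "\<forall>i<k. \<forall>j<k. B (w i) (w j) = (if i = j then d i else 0)"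
    and dn: "\<forall>i<k. d i < 0"
  shows "k \<le> form_index B"
proof -
  note fi = family_indep[OF dual]
  have "neg_definite_on B (span (w ` {..<k}))"
    unfolding neg_definite_on_def
  proof (intro ballI impI)
    fix x assume x: "x \<in> span (w ` {..<k})" "x \<noteq> 0"
    obtain c where c: "x = (\<Sum>i<k. c i *\<^sub>R w i)" using span_family[OF fi(2) x(1)] by blast
    have "\<exists>i<k. c i \<noteq> 0"
    proof (rule ccontr)
      assume "\<not> (\<exists>i<k. c i \<noteq> 0)"
      then have "x = 0" using c by simp
      then show False using x(2) by simp
    qed
    then obtain i0 where i0: "i0 < k" "c i0 \<noteq> 0" by blast
    have "B x x = (\<Sum>i<k. c i * (\<Sum>j<k. c j * B (w j) (w i)))" by (simp add: c sum_distrib_left)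
    also have "\<dots> = (\<Sum>i<k. d i * (c i)^2)"
    proof (intro sum.cong refl)
      fix i assume i: "i \<in> {..<k}"
      have "(\<Sum>j<k. c j * B (w j) (w i)) = c i * d i"
        by (rule sum_delta_lt) (use i ww in auto)
      then show "c i * (\<Sum>j<k. c j * B (w j) (w i)) = d i * (c i)^2" by (simp add: power2_eq_square)
    qed
    also have "\<dots> < 0"
    proof -
      have "(\<Sum>i<k. d i * (c i)^2) \<le> d i0 * (c i0)^2"
      proof -
        have "(\<Sum>i<k. d i * (c i)^2) = d i0 * (c i0)^2 + (\<Sum>i\<in>{..<k}-{i0}. d i * (c i)^2)"
          using i0 by (simp add: sum.remove)
        moreover have "(\<Sum>i\<in>{..<k}-{i0}. d i * (c i)^2) \<le> 0"
        proof (intro sum_nonpos)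
          fix i assume "i \<in> {..<k}-{i0}"
          then have "d i < 0" using dn by auto
          then show "d i * (c i)^2 \<le> 0" by (simp add: mult_nonpos_nonneg)
        qed
        ultimately show ?thesis by simp
      qed
      moreover have "d i0 * (c i0)^2 < 0" using i0 dn by (simp add: mult_neg_pos)
      ultimately show ?thesis by simp
    qed
    finally show "B x x < 0" .
  qed
  then have "dim (span (w ` {..<k})) \<le> form_index B" by (intro index_bound) auto
  then show ?thesis using fi(5) by simp
qed

lemma subspace_centre: "subspace (lie_centre br)"
  unfolding subspace_def lie_centre_def by simp

lemma nonnull_central_decomp:
  assumes c: "c \<in> lie_centre br" "B c c \<noteq> 0" and z0: "z0 \<noteq> 0" "B z0 z0 = 0"
  shows "decomposable br B"
proof -
  have cc: "br c x = 0" for x using c(1) by (simp add: lie_centre_def)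
  have cc2: "br x c = 0" for x using cc[of x] anti[of x c] by simp
  define I where "I = span {c}"
  define J where "J = {x. B c x = 0}"
  have I: "I = range (\<lambda>k. k *\<^sub>R c)" unfolding I_def by (simp add: span_singleton)
  have "lie_ideal br I" unfolding lie_ideal_def
  proof (intro conjI allI impI)
    show "subspace I" by (simp add: I_def)
    fix x y assume "y \<in> I"
    then obtain k where "y = k *\<^sub>R c" by (auto simp: I)
    then have "br x y = 0" by (simp add: cc2)
    then show "br x y \<in> I" by (simp add: I_def span_zero)
  qed
  moreover have "lie_ideal br J" unfolding lie_ideal_def J_def subspace_def
  proof (intro conjI allI impI)
    fix x y assume "y \<in> {x. B c x = 0}"
    have "B c (br x y) = B (br x y) c" by (rule Bsym)
    also have "\<dots> = 0" using inv[of x y c] cc2 by simp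
    finally show "br x y \<in> {x. B c x = 0}" by simp
  qed simp_all
  moreover have "I \<noteq> {0}"
  proof
    assume "I = {0}"
    moreover have "c \<in> I" by (simp add: I_def span_base)
    ultimately have "c = 0" by simp
    then show False using c(2) by simp
  qed
  moreover have "J \<noteq> {0}"
  proof
    assume J0: "J = {0}"
    define \<alpha> where "\<alpha> = B c z0 / B c c"
    define z' where "z' = z0 - \<alpha> *\<^sub>R c"
    have "z' \<in> J" using c(2) by (simp add: J_def z'_def \<alpha>_def)
    then have "z' = 0" using J0 by simp
    then have zz: "z0 = \<alpha> *\<^sub>R c" by (simp add: z'_def)
    have "B z0 z0 = \<alpha> * (\<alpha> * B c c)" by (subst (1 2) zz) simp
    then have "\<alpha> = 0" using z0(2) c(2) by simp
    then have "z0 = 0" using zz by simp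
    then show False using z0(1) by simp
  qed
  moreover have "I \<inter> J = {0}"
  proof -
    have kk: "k *\<^sub>R c = 0" if "B c (k *\<^sub>R c) = 0" for k using that c(2) by simp
    show ?thesis
    proof (intro equalityI subsetI)
      fix x assume "x \<in> I \<inter> J"
      then have x1: "x \<in> range (\<lambda>k. k *\<^sub>R c)" and x2: "B c x = 0" unfolding I J_def by auto
      from x1 obtain k where xk: "x = k *\<^sub>R c" by blast
      then have "k *\<^sub>R c = 0" using kk x2 by simp
      then show "x \<in> {0}" using xk by simp
    next
      fix x :: 'a assume "x \<in> {0}"
      then show "x \<in> I \<inter> J" by (simp add: I_def J_def span_zero)
    qed
  qed
  moreover have "\<forall>x. \<exists>a\<in>I. \<exists>b\<in>J. x = a + b"
  proof
    fix x
    have "(B c x / B c c) *\<^sub>R c \<in> I" unfolding I by (rule rangeI)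
    moreover have "x - (B c x / B c c) *\<^sub>R c \<in> J" using c(2) by (simp add: J_def)
    ultimately show "\<exists>a\<in>I. \<exists>b\<in>J. x = a + b" by (intro bexI) (auto simp del: B_simps)
  qed
  moreover have "\<forall>a\<in>I. \<forall>b\<in>J. B a b = 0" unfolding I J_def by auto
  ultimately show ?thesis unfolding decomposable_def by (intro exI[of _ I] exI[of _ J]) simp
qed

lemma isotropic_of_nonneg:
  assumes "subspace W" "\<forall>x\<in>W. B x x = 0" shows "\<forall>x\<in>W. \<forall>y\<in>W. B x y = 0"
proof (intro ballI)
  fix x y assume "x \<in> W" "y \<in> W"
  then have "x + y \<in> W" using assms(1) by (simp add: subspace_add)
  then have "B (x+y) (x+y) = 0" using assms(2) by blast
  then have "B x y + B y x = 0" using assms(2) \<open>x\<in>W\<close> \<open>y\<in>W\<close> by simp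
  then show "B x y = 0" using Bsym[of y x] by simp
qed


end

locale hyp = mla br B for br :: "'a::euclidean_space \<Rightarrow> 'a \<Rightarrow> 'a" and B +
  fixes r :: nat and u v :: "nat \<Rightarrow> 'a"
  assumes r_def: "r = form_index B" and rpos: "r > 0"
    and uv: "\<And>i j. i < r \<Longrightarrow> j < r \<Longrightarrow> B (u i) (v j) = (if i = j then 1 else 0)"
    and uu: "\<And>i j. i < r \<Longrightarrow> j < r \<Longrightarrow> B (u i) (u j) = 0"
    and vv: "\<And>i j. i < r \<Longrightarrow> j < r \<Longrightarrow> B (v i) (v j) = 0"
    and vc: "\<And>i x. i < r \<Longrightarrow> br (v i) x = 0"
    and indec: "indecomposable br B"
begin

definition E where "E = {x. \<forall>i<r. B x (u i) = 0 \<and> B x (v i) = 0}"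
definition pE where "pE x = x - (\<Sum>i<r. B x (v i) *\<^sub>R u i) - (\<Sum>i<r. B x (u i) *\<^sub>R v i)"

lemma vu: "i < r \<Longrightarrow> j < r \<Longrightarrow> B (v i) (u j) = (if i = j then 1 else 0)"
  using uv[of j i] Bsym[of "v i" "u j"] by auto

lemma vc2: "i < r \<Longrightarrow> br x (v i) = 0"
  using vc[of i x] anti[of x "v i"] by simp

lemma E_orth: "e \<in> E \<Longrightarrow> i < r \<Longrightarrow> B (u i) e = 0 \<and> B (v i) e = 0 \<and> B e (u i) = 0 \<and> B e (v i) = 0"
  unfolding E_def using Bsym by auto

lemma subspace_E: "subspace E"
  unfolding subspace_def E_def by simp

lemma sum_v_central: "br (\<Sum>i<r. c i *\<^sub>R v i) x = 0" "br x (\<Sum>i<r. c i *\<^sub>R v i) = 0"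
  by (simp_all add: vc vc2)

lemma pE_E: "pE x \<in> E"
proof -
  have "B (pE x) (u j) = 0 \<and> B (pE x) (v j) = 0" if j: "j < r" for j
  proof -
    have s1: "(\<Sum>i<r. B x (u i) * B (v i) (u j)) = B x (u j)"
      by (rule sum_delta_lt[OF j]) (simp add: vu j)
    have s2: "(\<Sum>i<r. B x (v i) * B (u i) (v j)) = B x (v j)"
      by (rule sum_delta_lt[OF j]) (simp add: uv j)
    show ?thesis using s1 s2 j by (simp add: pE_def uu vv)
  qed
  then show ?thesis by (simp add: E_def)
qed

lemma pE_id: "x \<in> E \<Longrightarrow> pE x = x"
  by (simp add: pE_def E_def)

lemma B_pE: "z \<in> E \<Longrightarrow> B (pE w) z = B w z"
  using E_orth[of z] by (simp add: pE_def)

lemma B_pE2: "z \<in> E \<Longrightarrow> B z (pE w) = B z w"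
  using B_pE[of z w] Bsym by metis

lemma decomp: "x = pE x + (\<Sum>i<r. B x (v i) *\<^sub>R u i) + (\<Sum>i<r. B x (u i) *\<^sub>R v i)"
  by (simp add: pE_def)

lemma lin_pE: "linear pE"
  unfolding pE_def
  by (rule linearI) (simp_all add: scaleR_sum_right sum.distrib algebra_simps)

lemma pE_simps[simp]: "pE (x + y) = pE x + pE y" "pE (x - y) = pE x - pE y" "pE (c *\<^sub>R x) = c *\<^sub>R pE x"
  "pE 0 = 0" "pE (- x) = - pE x" "pE (sum f A) = (\<Sum>i\<in>A. pE (f i))"
  using linear_add[OF lin_pE] linear_diff[OF lin_pE] linear_scale[OF lin_pE] linear_0[OF lin_pE]
    linear_neg[OF lin_pE] linear_sum[OF lin_pE] by auto

lemma pE_v: "i < r \<Longrightarrow> pE (v i) = 0"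
proof -
  assume i: "i < r"
  have "(\<Sum>j<r. B (v i) (u j) *\<^sub>R v j) = v i"
    by (rule sum_delta_lt[OF i]) (simp add: vu i)
  then show ?thesis using i by (simp add: pE_def vv)
qed

lemma pE_sumv: "pE (\<Sum>i<r. c i *\<^sub>R v i) = 0"
  by (simp add: pE_v)

lemma decomp_v: "(\<forall>j<r. B w (v j) = 0) \<Longrightarrow> w = pE w + (\<Sum>i<r. B w (u i) *\<^sub>R v i)"
  by (simp add: pE_def)

lemma posE: "pos_definite_on B E"
  unfolding pos_definite_on_def
proof (intro ballI impI, rule ccontr)
  fix e assume eE: "e \<in> E" and e0: "e \<noteq> 0" and ne: "\<not> 0 < B e e"
  obtain e' where e': "e' \<in> E" "B e' e' < 0"
  proof (cases "B e e < 0")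
    case True then show ?thesis using that eE by blast
  next
    case False
    then have ee: "B e e = 0" using ne by simp
    obtain y where y: "B e y \<noteq> 0" using nondeg[of e] e0 by blast
    define f where "f = pE y"
    have fE: "f \<in> E" by (simp add: f_def pE_E)
    define \<beta> where "\<beta> = B e f"
    have \<beta>: "\<beta> \<noteq> 0" using y B_pE2[OF eE, of y] by (simp add: \<beta>_def f_def)
    define m where "m = \<bar>B f f\<bar> + 1"
    have m: "m > 0" "B f f - 2 * m < 0" by (auto simp: m_def)
    define e2 where "e2 = e - (\<beta> / m) *\<^sub>R f"
    have "e2 \<in> E" using eE fE subspace_E by (simp add: e2_def subspace_diff subspace_scale)
    moreover have "B e2 e2 = (\<beta> / m)^2 * (B f f - 2 * m)"
      using ee Bsym[of f e] m(1) by (simp add: e2_def \<beta>_def power2_eq_square field_simps)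
    moreover have "(\<beta> / m)^2 * (B f f - 2 * m) < 0"
      using \<beta> m by (intro mult_pos_neg) auto
    ultimately show ?thesis using that by auto
  qed
  define w where "w i = (if i < r then u i - v i else e')" for i
  define p where "p i = (if i < r then v i else (1 / B e' e') *\<^sub>R e')" for i
  define d where "d i = (if i < r then -2 else B e' e')" for i
  have dual: "\<forall>i<Suc r. \<forall>j<Suc r. B (w i) (p j) = (if i = j then 1 else 0)"
    using e' E_orth[OF e'(1)] by (auto simp: w_def p_def uv vv less_Suc_eq)
  have ww: "\<forall>i<Suc r. \<forall>j<Suc r. B (w i) (w j) = (if i = j then d i else 0)"
    using e' E_orth[OF e'(1)] by (auto simp: w_def d_def uv vv uu vu less_Suc_eq)
  have dn: "\<forall>i<Suc r. d i < 0" using e' by (auto simp: d_def)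
  have "Suc r \<le> form_index B" by (rule diag_bound[OF dual ww dn])
  then show False using r_def by simp
qed


lemma v_ne0: "i < r \<Longrightarrow> v i \<noteq> 0"
  using uv[of i i] by auto

lemma centre_eq: "lie_centre br = span (v ` {..<r})"
proof -
  have iso: "\<forall>c\<in>lie_centre br. B c c = 0"
  proof (rule ballI, rule ccontr)
    fix c assume "c \<in> lie_centre br" "B c c \<noteq> 0"
    then have "decomposable br B"
      using nonnull_central_decomp[of c "v 0"] v_ne0[of 0] vv[of 0 0] rpos by auto
    then show False using indec by (simp add: indecomposable_def)
  qed
  have "dim (lie_centre br) \<le> form_index B"
    by (rule isotropic_bound[OF subspace_centre isotropic_of_nonneg[OF subspace_centre iso]])
  then have dC: "dim (lie_centre br) \<le> r" using r_def by simp
  have sub: "span (v ` {..<r}) \<subseteq> lie_centre br"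
    by (rule span_minimal) (auto simp: lie_centre_def vc intro: subspace_centre[unfolded lie_centre_def])
  have dual: "\<forall>i<r. \<forall>j<r. B (v i) (u j) = (if i = j then 1 else 0)" by (simp add: vu)
  have "dim (span (v ` {..<r})) = r" by (rule family_indep(5)[OF dual])
  then show ?thesis
    using subspace_dim_equal[OF subspace_span subspace_centre sub] dC by simp
qed


definition bE where "bE x y = pE (br x y)"
definition J where "J i x = pE (br (u i) x)"

lemma bE_E: "bE x y \<in> E" by (simp add: bE_def pE_E)
lemma J_E: "J i x \<in> E" by (simp add: J_def pE_E)

lemma bE_simps[simp]:
  "bE (x + y) z = bE x z + bE y z" "bE z (x + y) = bE z x + bE z y"
  "bE (x - y) z = bE x z - bE y z" "bE z (x - y) = bE z x - bE z y"
  "bE (c *\<^sub>R x) z = c *\<^sub>R bE x z" "bE z (c *\<^sub>R x) = c *\<^sub>R bE z x"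
  "bE 0 z = 0" "bE z 0 = 0"
  "bE (sum f A) z = (\<Sum>i\<in>A. bE (f i) z)" "bE z (sum f A) = (\<Sum>i\<in>A. bE z (f i))"
  by (simp_all add: bE_def)

lemma J_simps[simp]:
  "J i (x + y) = J i x + J i y" "J i (x - y) = J i x - J i y" "J i (c *\<^sub>R x) = c *\<^sub>R J i x"
  "J i 0 = 0" "J i (sum f A) = (\<Sum>k\<in>A. J i (f k))"
  by (simp_all add: J_def)

lemma lin_bE1: "linear (\<lambda>x. bE x y)" by (rule linearI) simp_all
lemma lin_bE2: "linear (\<lambda>y. bE x y)" by (rule linearI) simp_all
lemma lin_J: "linear (J i)" by (rule linearI) simp_all

lemma bE_anti: "bE x y = - bE y x"
  by (simp add: bE_def anti[of x y] linear_neg[OF lin_pE])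

lemma br_decomp: "br x y = bE x y + (\<Sum>k<r. B (br x y) (u k) *\<^sub>R v k)"
proof -
  have "\<forall>j<r. B (br x y) (v j) = 0" using inv[of x y] vc2 by simp
  then show ?thesis unfolding bE_def by (rule decomp_v)
qed

lemma br_br_l: "br (br x y) z = br (bE x y) z"
  by (subst br_decomp) (simp add: vc)

lemma br_br_r: "br z (br x y) = br z (bE x y)"
  by (subst br_decomp) (simp add: vc2)

lemma bE_inv: "y \<in> E \<Longrightarrow> z \<in> E \<Longrightarrow> B (bE x y) z = - B y (bE x z)"
  by (simp add: bE_def B_pE B_pE2 inv)

lemma bE_jac: "bE x (bE y z) = bE (bE x y) z + bE y (bE x z)"
proof -
  have "bE x (bE y z) = pE (br x (br y z))" by (simp add: bE_def br_br_r[unfolded bE_def])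
  also have "\<dots> = pE (br (br x y) z) + pE (br y (br x z))" by (subst jac2) simp
  also have "\<dots> = bE (bE x y) z + bE y (bE x z)" by (simp add: bE_def br_br_l br_br_r)
  finally show ?thesis .
qed

lemma u_br_decomp: "i < r \<Longrightarrow> br (u i) x = J i x + (\<Sum>k<r. B (br (u i) x) (u k) *\<^sub>R v k)"
proof -
  assume i: "i < r"
  have "\<forall>j<r. B (br (u i) x) (v j) = 0" using inv[of "u i" x] vc2 by simp
  then show ?thesis unfolding J_def by (rule decomp_v)
qed

lemma J_der: "i < r \<Longrightarrow> J i (bE x y) = bE (J i x) y + bE x (J i y)"
proof -
  assume i: "i < r"
  have "J i (bE x y) = pE (br (u i) (br x y))" by (simp add: J_def bE_def br_br_r[unfolded bE_def])
  also have "\<dots> = pE (br (br (u i) x) y) + pE (br x (br (u i) y))" by (subst jac2) simp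
  also have "br (br (u i) x) y = br (J i x) y" by (subst u_br_decomp[OF i]) (simp add: vc)
  also have "br x (br (u i) y) = br x (J i y)" by (subst u_br_decomp[OF i]) (simp add: vc2)
  finally show ?thesis by (simp add: bE_def)
qed

lemma J_skew: "x \<in> E \<Longrightarrow> y \<in> E \<Longrightarrow> B (J i x) y = - B x (J i y)"
  by (simp add: J_def B_pE B_pE2 inv)



lemma B_nonneg_E: "z \<in> E \<Longrightarrow> B z z \<ge> 0"
  using posE unfolding pos_definite_on_def by (cases "z = 0") (auto intro: less_imp_le)

lemma B_zero_E: "z \<in> E \<Longrightarrow> B z z = 0 \<Longrightarrow> z = 0"
  using posE unfolding pos_definite_on_def by fastforce

definition S where "S = span {bE x y | x y. x \<in> E \<and> y \<in> E}"

lemma S_E: "S \<subseteq> E"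
  unfolding S_def by (rule span_minimal) (auto simp: bE_E subspace_E)

lemma bE_S: "bE x y \<in> S" if "x \<in> E" "y \<in> E"
  unfolding S_def using that by (intro span_base) blast

end

locale hypQ = hyp +
  fixes Q :: "'a set"
  assumes Qfin: "finite Q" and QE: "Q \<subseteq> E" and EQ: "E \<subseteq> span Q"
    and Q1: "\<And>e. e \<in> Q \<Longrightarrow> B e e = 1"
    and Q0: "\<And>e f. e \<in> Q \<Longrightarrow> f \<in> Q \<Longrightarrow> e \<noteq> f \<Longrightarrow> B e f = 0"
begin

lemma parseval: "x \<in> E \<Longrightarrow> (\<Sum>f\<in>Q. B x f *\<^sub>R f) = x"
  using onb_proj(3)[OF Qfin QE EQ subspace_E] Q1 Q0 posE by blast

lemma spanQ: "span Q = E"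
  using span_minimal[OF QE subspace_E] EQ by blast

lemma QE': "e \<in> Q \<Longrightarrow> e \<in> E" using QE by blast

lemma trace_cyc:
  assumes X: "linear X" "\<And>x. x \<in> E \<Longrightarrow> X x \<in> E" and Y: "linear Y" "\<And>x. x \<in> E \<Longrightarrow> Y x \<in> E"
  shows "(\<Sum>e\<in>Q. B (X (Y e)) e) = (\<Sum>e\<in>Q. B (Y (X e)) e)"
proof -
  have gen: "(\<Sum>e\<in>Q. B (X (Y e)) e) = (\<Sum>e\<in>Q. \<Sum>f\<in>Q. B (Y e) f * B (X f) e)"
    if X: "linear X" and Y: "\<And>x. x \<in> E \<Longrightarrow> Y x \<in> E" for X Y
  proof (rule sum.cong[OF refl])
    fix e assume e: "e \<in> Q"
    have "X (Y e) = X (\<Sum>f\<in>Q. B (Y e) f *\<^sub>R f)" using parseval[OF Y[OF QE'[OF e]]] by simp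
    also have "\<dots> = (\<Sum>f\<in>Q. B (Y e) f *\<^sub>R X f)"
      by (simp add: linear_sum[OF X] linear_scale[OF X])
    finally show "B (X (Y e)) e = (\<Sum>f\<in>Q. B (Y e) f * B (X f) e)" by simp
  qed
  have "(\<Sum>e\<in>Q. B (X (Y e)) e) = (\<Sum>e\<in>Q. \<Sum>f\<in>Q. B (Y e) f * B (X f) e)" by (rule gen[OF X(1) Y(2)])
  also have "\<dots> = (\<Sum>f\<in>Q. \<Sum>e\<in>Q. B (Y e) f * B (X f) e)" by (rule sum.swap)
  also have "\<dots> = (\<Sum>f\<in>Q. \<Sum>e\<in>Q. B (X f) e * B (Y e) f)" by (simp add: mult.commute)
  also have "\<dots> = (\<Sum>e\<in>Q. B (Y (X e)) e)" by (rule gen[OF Y(1) X(2), symmetric])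
  finally show ?thesis .
qed

lemma inner_der:
  assumes i: "i < r"
  shows "\<exists>c\<in>E. \<forall>x\<in>E. \<forall>y\<in>E. J i (bE x y) = bE c (bE x y)"
proof -
  define N where "N c y = (\<Sum>e\<in>Q. B (bE c e) (bE y e))" for c y
  define \<phi> where "\<phi> y = (\<Sum>e\<in>Q. B (J i e) (bE y e))" for y
  define \<kappa> where "\<kappa> = (\<Sum>e\<in>Q. B (J i e) (J i e))"
  have bil: "bilinear N" unfolding bilinear_def
  proof (intro conjI allI)
    fix x show "linear (N x)"
      by (rule linearI) (simp_all add: N_def sum.distrib sum_distrib_left)
  next
    fix y show "linear (\<lambda>x. N x y)"
      by (rule linearI) (simp_all add: N_def sum.distrib sum_distrib_left)
  qed
  have sym: "N x y = N y x" for x y unfolding N_def by (rule sum.cong[OF refl]) (rule Bsym)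
  have psd: "N x x \<ge> 0" for x unfolding N_def by (intro sum_nonneg B_nonneg_E bE_E)
  have linphi: "linear \<phi>"
    by (rule linearI) (simp_all add: \<phi>_def sum.distrib sum_distrib_left)
  have bound: "\<forall>c. \<kappa> - 2 * \<phi> c + N c c \<ge> 0"
  proof
    fix c
    have "\<kappa> - 2 * \<phi> c + N c c = (\<Sum>e\<in>Q. B (J i e - bE c e) (J i e - bE c e))"
    proof -
      have "B (J i e - bE c e) (J i e - bE c e) = B (J i e) (J i e) - 2 * B (J i e) (bE c e) + B (bE c e) (bE c e)" for e
        using Bsym[of "bE c e" "J i e"] by simp
      then show ?thesis unfolding \<kappa>_def \<phi>_def N_def
        by (simp only: sum.distrib sum_subtractf sum_distrib_left[symmetric])
    qed
    also have "\<dots> \<ge> 0" by (intro sum_nonneg B_nonneg_E subspace_diff[OF subspace_E] J_E bE_E)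
    finally show "\<kappa> - 2 * \<phi> c + N c c \<ge> 0" .
  qed
  obtain c where c: "c \<in> span Q" "\<forall>y\<in>span Q. N c y = \<phi> y"
    using quad_min[OF bil sym psd Qfin linphi bound] by blast
  have cE: "c \<in> E" using c(1) spanQ by simp
  define D where "D x = J i x - bE c x" for x
  have linD: "linear D" unfolding D_def by (rule linearI) (simp_all add: algebra_simps)
  have DE: "D x \<in> E" for x unfolding D_def by (intro subspace_diff[OF subspace_E] J_E bE_E)
  have Dskew: "B (D x) y = - B x (D y)" if "x \<in> E" "y \<in> E" for x y
    using J_skew[OF that, of i] bE_inv[OF that, of c] by (simp add: D_def)
  have Dder: "D (bE x y) = bE (D x) y + bE x (D y)" for x y
    using J_der[OF i, of x y] bE_jac[of c x y] by (simp add: D_def algebra_simps)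
  have orthD: "(\<Sum>e\<in>Q. B (D e) (bE y e)) = 0" if y: "y \<in> E" for y
  proof -
    have "N c y = \<phi> y" using c(2) y spanQ by simp
    then show ?thesis by (simp add: N_def \<phi>_def D_def sum_subtractf)
  qed
  have key: "(\<Sum>e\<in>Q. B (bE (D x) e) (bE y e)) = 0" if x: "x \<in> E" and y: "y \<in> E" for x y
  proof -
    have t: "B (bE (D x) e) (bE y e) = B (bE x (D (bE y e))) e - B (D (bE x (bE y e))) e"
      if e: "e \<in> E" for e
    proof -
      have "bE (D x) e = D (bE x e) - bE x (D e)" using Dder[of x e] by simp
      then have "B (bE (D x) e) (bE y e) = B (D (bE x e)) (bE y e) - B (bE x (D e)) (bE y e)" by simp
      also have "B (D (bE x e)) (bE y e) = B (bE x (D (bE y e))) e"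
      proof -
        have "B (D (bE x e)) (bE y e) = - B (bE x e) (D (bE y e))" by (rule Dskew) (simp_all add: bE_E)
        also have "\<dots> = B e (bE x (D (bE y e)))" using bE_inv[OF e DE, of x] by simp
        finally show ?thesis using Bsym by metis
      qed
      also have "B (bE x (D e)) (bE y e) = B (D (bE x (bE y e))) e"
      proof -
        have "B (bE x (D e)) (bE y e) = - B (D e) (bE x (bE y e))" by (rule bE_inv) (simp_all add: DE bE_E)
        also have "\<dots> = B e (D (bE x (bE y e)))" using Dskew[OF e bE_E] by simp
        finally show ?thesis using Bsym by metis
      qed
      finally show ?thesis .
    qed
    have cyc: "(\<Sum>e\<in>Q. B (bE x (D (bE y e))) e) = (\<Sum>e\<in>Q. B (D (bE y (bE x e))) e)"
      using trace_cyc[of "\<lambda>z. bE x z" "\<lambda>z. D (bE y z)"] lin_bE2 linear_compose[OF lin_bE2 linD]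
      by (simp add: bE_E DE o_def)
    have "(\<Sum>e\<in>Q. B (bE (D x) e) (bE y e))
        = (\<Sum>e\<in>Q. B (bE x (D (bE y e))) e) - (\<Sum>e\<in>Q. B (D (bE x (bE y e))) e)"
      using t QE by (simp add: sum_subtractf subset_iff)
    also have "\<dots> = (\<Sum>e\<in>Q. B (D (bE y (bE x e))) e - B (D (bE x (bE y e))) e)"
      using cyc by (simp add: sum_subtractf)
    also have "\<dots> = (\<Sum>e\<in>Q. B (D (bE (bE y x) e)) e)"
    proof (rule sum.cong[OF refl])
      fix e
      have "bE y (bE x e) = bE (bE y x) e + bE x (bE y e)" by (rule bE_jac)
      then have "D (bE y (bE x e)) = D (bE (bE y x) e) + D (bE x (bE y e))"
        by (simp add: linear_add[OF linD])
      then show "B (D (bE y (bE x e))) e - B (D (bE x (bE y e))) e = B (D (bE (bE y x) e)) e" by simp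
    qed
    also have "\<dots> = - (\<Sum>e\<in>Q. B (D e) (bE (bE y x) e))"
    proof -
      have "B (D (bE (bE y x) e)) e = - B (D e) (bE (bE y x) e)" if e: "e \<in> Q" for e
        using Dskew[OF bE_E QE'[OF e], of "bE y x"] Bsym by metis
      then show ?thesis by (simp add: sum_negf)
    qed
    also have "\<dots> = 0" using orthD[OF bE_E] by simp
    finally show ?thesis .
  qed
  have cent: "bE (D x) z = 0" if x: "x \<in> E" and z: "z \<in> E" for x z
  proof -
    have "(\<Sum>e\<in>Q. B (bE (D x) e) (bE (D x) e)) = 0" by (rule key[OF x DE])
    then have h0: "\<forall>e\<in>Q. B (bE (D x) e) (bE (D x) e) = 0"
      using sum_nonneg_eq_0_iff[OF Qfin, of "\<lambda>e. B (bE (D x) e) (bE (D x) e)"] B_nonneg_E[OF bE_E] by simp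
    have h1: "bE (D x) e = 0" if "e \<in> Q" for e
      using h0 that B_zero_E[OF bE_E, of "D x" e] by simp
    show ?thesis by (rule lin0_span[OF lin_bE2, of z Q]) (use z EQ in blast, rule h1)
  qed
  have "J i (bE x y) = bE c (bE x y)" if x: "x \<in> E" and y: "y \<in> E" for x y
  proof -
    have "D (bE x y) = bE (D x) y + bE x (D y)" by (rule Dder)
    also have "\<dots> = 0"
    proof -
      have "bE x (D y) = - bE (D y) x" by (rule bE_anti)
      then show ?thesis using cent[OF x y] cent[OF y x] by simp
    qed
    finally show ?thesis by (simp add: D_def)
  qed
  then show ?thesis using cE by blast
qed


lemma S_sub: "subspace S" by (simp add: S_def)

lemma S_E': "x \<in> S \<Longrightarrow> x \<in> E" using S_E by blast

lemma lin_img_span: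
  assumes "linear h" "\<And>g. g \<in> G \<Longrightarrow> h g \<in> I" "subspace I" "y \<in> span G"
  shows "h y \<in> I"
proof -
  have "h ` G \<subseteq> I" using assms(2) by blast
  then have "span (h ` G) \<subseteq> I" using span_minimal assms(3) by blast
  then show ?thesis using linear_span_image[OF assms(1), of G] assms(4) by blast
qed

lemma bE_S_zero:
  assumes s: "s \<in> S" and t: "t \<in> S" shows "bE s t = 0"
proof -
  have "\<forall>i. \<exists>c. i < r \<longrightarrow> c \<in> E \<and> (\<forall>x\<in>E. \<forall>y\<in>E. J i (bE x y) = bE c (bE x y))"
    using inner_der by blast
  then obtain cc where cc: "\<And>i. i < r \<Longrightarrow> cc i \<in> E"
    "\<And>i x y. i < r \<Longrightarrow> x \<in> E \<Longrightarrow> y \<in> E \<Longrightarrow> J i (bE x y) = bE (cc i) (bE x y)"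
    by metis
  have JS: "J i w = bE (cc i) w" if i: "i < r" and w: "w \<in> S" for i w
  proof -
    have "J i w - bE (cc i) w = 0"
    proof (rule lin0_span[of "\<lambda>w. J i w - bE (cc i) w" w])
      show "linear (\<lambda>w. J i w - bE (cc i) w)" by (rule linearI) (simp_all add: algebra_simps)
      show "w \<in> span {bE x y | x y. x \<in> E \<and> y \<in> E}" using w by (simp add: S_def)
      fix b assume "b \<in> {bE x y | x y. x \<in> E \<and> y \<in> E}"
      then show "J i b - bE (cc i) b = 0" using cc(2)[OF i] by auto
    qed
    then show ?thesis by simp
  qed
  define f where "f a = a + (\<Sum>i<r. B a (cc i) *\<^sub>R v i)" for a
  have linf: "linear f" unfolding f_def
    by (rule linearI) (simp_all add: scaleR_sum_right sum.distrib algebra_simps)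
  have brf: "br x y = f (bE x y)" if x: "x \<in> E" and y: "y \<in> S" for x y
  proof -
    have yE: "y \<in> E" using y S_E by blast
    have "B (br x y) (u k) = B (bE x y) (cc k)" if k: "k < r" for k
    proof -
      have "B (br x y) (u k) = - B y (br x (u k))" by (rule inv)
      also have "\<dots> = B y (br (u k) x)" using anti[of x "u k"] by simp
      also have "\<dots> = B y (J k x)" using B_pE2[OF yE] by (simp add: J_def)
      also have "\<dots> = - B x (J k y)" using J_skew[OF x yE, of k] Bsym by metis
      also have "\<dots> = - B x (bE (cc k) y)" using JS[OF k y] by simp
      also have "\<dots> = B (bE (cc k) x) y" using bE_inv[OF x yE, of "cc k"] by simp
      also have "\<dots> = - B (bE x (cc k)) y" using bE_anti[of "cc k" x] by simp
      also have "\<dots> = B (bE x y) (cc k)" using bE_inv[OF yE cc(1)[OF k], of x] Bsym by metis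
      finally show ?thesis .
    qed
    then show ?thesis by (subst br_decomp) (simp add: f_def)
  qed
  define I where "I = span {br x y | x y. x \<in> S \<and> y \<in> S}"
  have subI: "subspace I" by (simp add: I_def)
  have I_f: "I \<subseteq> f ` S"
    unfolding I_def
  proof (rule span_minimal)
    show "subspace (f ` S)" by (rule linear_subspace_image[OF linf S_sub])
    show "{br x y | x y. x \<in> S \<and> y \<in> S} \<subseteq> f ` S"
      using brf S_E' bE_S by (auto intro!: imageI)
  qed
  have fBf: "B (f a) (f a') = B a a'" if "a \<in> E" "a' \<in> E" for a a'
    using E_orth[OF that(1)] E_orth[OF that(2)] by (simp add: f_def vv)
  have Ipos: "pos_definite_on B I" unfolding pos_definite_on_def
  proof (intro ballI impI)
    fix w assume "w \<in> I" "w \<noteq> 0"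
    then obtain a where a: "a \<in> S" "w = f a" using I_f by blast
    then have "a \<noteq> 0" using \<open>w \<noteq> 0\<close> linear_0[OF linf] by auto
    then have "B a a > 0" using posE S_E a(1) unfolding pos_definite_on_def by blast
    then show "B w w > 0" using fBf[OF S_E' S_E'] a by simp
  qed
  have gens: "br x (br s' t') \<in> I" if s': "s' \<in> S" and t': "t' \<in> S" for x s' t'
  proof -
    have gen: "br a b \<in> I" if "a \<in> S" "b \<in> S" for a b
      unfolding I_def using that by (intro span_base) blast
    have e_case: "br e (br s' t') \<in> I" if e: "e \<in> E" for e
    proof -
      have "br e (br s' t') = br (br e s') t' + br s' (br e t')" by (rule jac2)
      then have "br e (br s' t') = br (bE e s') t' + br s' (bE e t')"
        by (simp only: br_br_l br_br_r)
      moreover have "br (bE e s') t' \<in> I" using gen[OF bE_S[OF e S_E'[OF s']] t'] .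
      moreover have "br s' (bE e t') \<in> I" using gen[OF s' bE_S[OF e S_E'[OF t']]] .
      ultimately show ?thesis by (simp add: subspace_add[OF subI])
    qed
    have u_case: "br (u i) (br s' t') \<in> I" if i: "i < r" for i
    proof -
      have "br (br (u i) s') t' = br (J i s') t'" by (subst u_br_decomp[OF i]) (simp add: vc)
      moreover have "br s' (br (u i) t') = br s' (J i t')" by (subst u_br_decomp[OF i]) (simp add: vc2)
      moreover have "br (u i) (br s' t') = br (br (u i) s') t' + br s' (br (u i) t')" by (rule jac2)
      ultimately have "br (u i) (br s' t') = br (J i s') t' + br s' (J i t')" by simp
      moreover have "J i s' \<in> S" using JS[OF i s'] bE_S[OF cc(1)[OF i] S_E'[OF s']] by simp
      moreover have "J i t' \<in> S" using JS[OF i t'] bE_S[OF cc(1)[OF i] S_E'[OF t']] by simp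
      ultimately show ?thesis using gen s' t' by (simp add: subspace_add[OF subI])
    qed
    have "br x (br s' t') = br (pE x) (br s' t') + (\<Sum>i<r. B x (v i) *\<^sub>R br (u i) (br s' t'))
        + (\<Sum>i<r. B x (u i) *\<^sub>R br (v i) (br s' t'))"
      by (subst decomp[of x]) simp
    also have "\<dots> \<in> I"
      using e_case[OF pE_E] u_case subI
      by (intro subspace_add[OF subI] subspace_sum[OF subI] subspace_scale[OF subI]) (auto simp: vc subspace_0[OF subI])
    finally show ?thesis .
  qed
  have idI: "lie_ideal br I" unfolding lie_ideal_def
  proof (intro conjI allI impI subI)
    fix x y assume "y \<in> I"
    show "br x y \<in> I"
    proof (rule lin_img_span[OF linbrr _ subI])
      show "y \<in> span {br x y | x y. x \<in> S \<and> y \<in> S}" using \<open>y \<in> I\<close> by (simp add: I_def)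
      fix g assume "g \<in> {br x y | x y. x \<in> S \<and> y \<in> S}"
      then show "br x g \<in> I" using gens by auto
    qed
  qed
  define Ip where "Ip = {x. \<forall>y\<in>I. B x y = 0}"
  have idIp: "lie_ideal br Ip" unfolding lie_ideal_def
  proof (intro conjI allI impI)
    show "subspace Ip" unfolding Ip_def subspace_def by simp
    fix x y assume "y \<in> Ip"
    then show "br x y \<in> Ip" using idI unfolding Ip_def lie_ideal_def by (simp add: inv)
  qed
  obtain Q2 where Q2: "finite Q2" "Q2 \<subseteq> I" "I \<subseteq> span Q2" "\<forall>e\<in>Q2. B e e = 1"
    "\<forall>e\<in>Q2. \<forall>f\<in>Q2. e \<noteq> f \<longrightarrow> B e f = 0"
    using onb_exists[OF subI Ipos] by blast
  note pj = onb_proj[OF Q2(1,2,3) subI Q2(4,5)]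
  have v0: "v 0 \<in> Ip"
  proof -
    have "B (v 0) w = 0" if "w \<in> I" for w
    proof -
      obtain a where a: "a \<in> S" "w = f a" using I_f \<open>w \<in> I\<close> by blast
      show ?thesis using a E_orth[OF S_E'[OF a(1)], of 0] rpos by (simp add: f_def vv)
    qed
    then show ?thesis by (simp add: Ip_def)
  qed
  have "I = {0}"
  proof (rule ccontr)
    assume "I \<noteq> {0}"
    moreover have "Ip \<noteq> {0}" using v0 v_ne0[OF rpos] by blast
    moreover have "I \<inter> Ip = {0}"
    proof (intro equalityI subsetI)
      fix x assume "x \<in> I \<inter> Ip"
      then have "B x x = 0" "x \<in> I" unfolding Ip_def using Bsym by auto
      then show "x \<in> {0}" using Ipos unfolding pos_definite_on_def by fastforce
    next
      fix x :: 'a assume "x \<in> {0}"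
      then show "x \<in> I \<inter> Ip" using subI by (simp add: Ip_def subspace_0)
    qed
    moreover have "\<forall>x. \<exists>a\<in>I. \<exists>b\<in>Ip. x = a + b"
    proof
      fix x
      have "(\<Sum>e\<in>Q2. B x e *\<^sub>R e) \<in> I" by (rule pj(1))
      moreover have "x - (\<Sum>e\<in>Q2. B x e *\<^sub>R e) \<in> Ip" unfolding Ip_def mem_Collect_eq by (intro ballI pj(2))
      ultimately show "\<exists>a\<in>I. \<exists>b\<in>Ip. x = a + b" by (intro bexI) (auto simp del: B_simps)
    qed
    moreover have "\<forall>a\<in>I. \<forall>b\<in>Ip. B a b = 0" unfolding Ip_def using Bsym by auto
    ultimately have "decomposable br B" unfolding decomposable_def using idI idIp
      by (intro exI[of _ I] exI[of _ Ip]) simp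
    then show False using indec by (simp add: indecomposable_def)
  qed
  moreover have "br s t \<in> I" unfolding I_def using s t by (intro span_base) blast
  ultimately have "br s t = 0" by simp
  then show ?thesis by (simp add: bE_def)
qed


lemma bE_zero:
  assumes x: "x \<in> E" and y: "y \<in> E" shows "bE x y = 0"
proof -
  have Spos: "pos_definite_on B S" using posE S_E unfolding pos_definite_on_def by blast
  obtain Q3 where Q3: "finite Q3" "Q3 \<subseteq> S" "S \<subseteq> span Q3" "\<forall>e\<in>Q3. B e e = 1"
    "\<forall>e\<in>Q3. \<forall>f\<in>Q3. e \<noteq> f \<longrightarrow> B e f = 0"
    using onb_exists[OF S_sub Spos] by blast
  note pj = onb_proj[OF Q3(1,2,3) S_sub Q3(4,5)]
  define ps where "ps x = (\<Sum>e\<in>Q3. B x e *\<^sub>R e)" for x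
  have psS: "ps x \<in> S" for x unfolding ps_def by (rule pj(1))
  have A: "bE (x - ps x) y = 0" if x: "x \<in> E" and y: "y \<in> E" for x y
  proof -
    have x': "x - ps x \<in> E" using x S_E'[OF psS] subspace_E by (simp add: subspace_diff)
    define z where "z = bE (x - ps x) y"
    have zE: "z \<in> E" unfolding z_def by (rule bE_E)
    have "B z z = - B (bE y (x - ps x)) z" using bE_anti[of "x - ps x" y] by (simp add: z_def)
    also have "\<dots> = B (x - ps x) (bE y z)" using bE_inv[OF x' zE, of y] by simp
    also have "\<dots> = 0" unfolding ps_def by (rule pj(2)) (rule bE_S[OF y zE])
    finally have "z = 0" using B_zero_E[OF zE] by simp
    then show ?thesis by (simp add: z_def)
  qed
  have "bE x y = bE (x - ps x) y + bE (ps x) y" by simp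
  also have "\<dots> = bE (ps x) y" using A[OF x y] by simp
  also have "\<dots> = - bE y (ps x)" by (rule bE_anti)
  also have "bE y (ps x) = bE (y - ps y) (ps x) + bE (ps y) (ps x)" by simp
  also have "\<dots> = 0" using A[OF y S_E'[OF psS]] bE_S_zero[OF psS psS] by simp
  finally show ?thesis by simp
qed

end


context hyp
begin

lemma bE_zero_h: "x \<in> E \<Longrightarrow> y \<in> E \<Longrightarrow> bE x y = 0"
proof -
  assume xy: "x \<in> E" "y \<in> E"
  obtain Q where Q: "finite Q" "Q \<subseteq> E" "E \<subseteq> span Q" "\<forall>e\<in>Q. B e e = 1"
    "\<forall>e\<in>Q. \<forall>f\<in>Q. e \<noteq> f \<longrightarrow> B e f = 0"
    using onb_exists[OF subspace_E posE] by blast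
  interpret q: hypQ br B r u v Q
    by unfold_locales (use Q in auto)
  show ?thesis by (rule q.bE_zero[OF xy])
qed

definition K where "K i j = pE (br (u i) (u j))"
definition L where "L i j k = B (br (u i) (u j)) (u k)"

lemma K_E: "K i j \<in> E" by (simp add: K_def pE_E)

definition ww where "ww i = (if i < r then u i else v (i - r))" for i
definition pp where "pp i = (if i < r then v i else u (i - r))" for i

lemma ww_dual: "\<forall>i<2*r. \<forall>j<2*r. B (ww i) (pp j) = (if i = j then 1 else 0)"
proof (intro allI impI)
  fix i j assume "i < 2*r" "j < 2*r"
  then show "B (ww i) (pp j) = (if i = j then 1 else 0)"
    by (cases "i < r"; cases "j < r") (auto simp: ww_def pp_def uv uu vv vu)
qed

lemma P_eq: "u ` {..<r} \<union> v ` {..<r} = ww ` {..<2*r}"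
proof (intro equalityI subsetI)
  fix x assume "x \<in> u ` {..<r} \<union> v ` {..<r}"
  then show "x \<in> ww ` {..<2*r}"
  proof
    assume "x \<in> u ` {..<r}"
    then obtain i where "i < r" "x = u i" by auto
    then show ?thesis by (intro image_eqI[of _ _ i]) (auto simp: ww_def)
  next
    assume "x \<in> v ` {..<r}"
    then obtain i where "i < r" "x = v i" by auto
    then show ?thesis by (intro image_eqI[of _ _ "i + r"]) (auto simp: ww_def)
  qed
next
  fix x assume "x \<in> ww ` {..<2*r}"
  then obtain i where i: "i < 2*r" "x = ww i" by auto
  show "x \<in> u ` {..<r} \<union> v ` {..<r}"
  proof (cases "i < r")
    case True then show ?thesis using i by (auto simp: ww_def)
  next
    case False then have "i - r < r" using i by simp
    then show ?thesis using i False by (auto simp: ww_def)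
  qed
qed

lemma P_indep: "independent (u ` {..<r} \<union> v ` {..<r})" and P_card: "card (u ` {..<r} \<union> v ` {..<r}) = 2 * r"
  using family_indep(3,4)[OF ww_dual] by (simp_all add: P_eq)

lemma P_E: "span (u ` {..<r} \<union> v ` {..<r}) \<inter> E = {0}"
proof (intro equalityI subsetI)
  fix x assume x: "x \<in> span (u ` {..<r} \<union> v ` {..<r}) \<inter> E"
  then obtain c where c: "x = (\<Sum>i<2*r. c i *\<^sub>R ww i)"
    using span_family[OF family_indep(2)[OF ww_dual]] by (auto simp: P_eq)
  have "c j = 0" if j: "j < 2*r" for j
  proof -
    have "B x (pp j) = c j" unfolding c
      by (simp, rule sum_delta_lt[OF j]) (use ww_dual j in auto)
    moreover have "B x (pp j) = 0" using x E_orth[of x] j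
      by (cases "j < r") (auto simp: pp_def)
    ultimately show ?thesis by simp
  qed
  then have "x = 0" using c by simp
  then show "x \<in> {0}" by simp
next
  fix x :: 'a assume "x \<in> {0}"
  then show "x \<in> span (u ` {..<r} \<union> v ` {..<r}) \<inter> E" using subspace_E by (simp add: span_zero subspace_0)
qed

lemma P_decomp: "\<exists>a\<in>span (u ` {..<r} \<union> v ` {..<r}). \<exists>e\<in>E. x = a + e"
proof (intro bexI)
  show "x = ((\<Sum>i<r. B x (v i) *\<^sub>R u i) + (\<Sum>i<r. B x (u i) *\<^sub>R v i)) + pE x"
    using decomp[of x] by (simp add: algebra_simps)
  show "pE x \<in> E" by (rule pE_E)
  show "(\<Sum>i<r. B x (v i) *\<^sub>R u i) + (\<Sum>i<r. B x (u i) *\<^sub>R v i) \<in> span (u ` {..<r} \<union> v ` {..<r})"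
    by (intro span_add span_sum span_scale span_base) auto
qed

lemma K_skew: "K i j = - K j i"
  by (simp add: K_def anti[of "u i"] linear_neg[OF lin_pE])

lemma L_skew1: "L i j k = - L j i k"
  by (simp add: L_def anti[of "u i"])

lemma L_skew2: "L i j k = - L i k j"
  unfolding L_def using inv[of "u i" "u j" "u k"] Bsym[of "u j" "br (u i) (u k)"] by linarith

lemma br_uu: "br (u i) (u j) = K i j + (\<Sum>k<r. L i j k *\<^sub>R v k)"
  by (subst br_decomp) (simp add: K_def L_def bE_def)

lemma br_ux: "i < r \<Longrightarrow> x \<in> E \<Longrightarrow> br (u i) x = J i x - (\<Sum>j<r. B (K i j) x *\<^sub>R v j)"
proof -
  assume i: "i < r" and x: "x \<in> E"
  have "B (br (u i) x) (u k) = - B (K i k) x" for k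
    using inv[of "u i" x "u k"] B_pE2[OF x, of "br (u i) (u k)"] Bsym[of x "K i k"]
    by (simp add: K_def)
  then show ?thesis by (subst u_br_decomp[OF i]) (simp add: sum_negf)
qed

lemma br_xy: "x \<in> E \<Longrightarrow> y \<in> E \<Longrightarrow> br x y = - (\<Sum>i<r. B x (J i y) *\<^sub>R v i)"
proof -
  assume x: "x \<in> E" and y: "y \<in> E"
  have "B (br x y) (u k) = - B x (J k y)" if k: "k < r" for k
  proof -
    have "B (br x y) (u k) = - B y (br x (u k))" by (rule inv)
    also have "\<dots> = B y (br (u k) x)" using anti[of x "u k"] by simp
    also have "\<dots> = B y (J k x)" using B_pE2[OF y] by (simp add: J_def)
    also have "\<dots> = - B x (J k y)" using J_skew[OF x y, of k] Bsym by metis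
    finally show ?thesis .
  qed
  then show ?thesis by (subst br_decomp) (simp add: bE_zero_h[OF x y] sum_negf)
qed

lemma J_comm: "i < r \<Longrightarrow> j < r \<Longrightarrow> x \<in> E \<Longrightarrow> J i (J j x) - J j (J i x) = 0"
proof -
  assume i: "i < r" and j: "j < r" and x: "x \<in> E"
  have "br (u i) (br (u j) x) = br (br (u i) (u j)) x + br (u j) (br (u i) x)" by (rule jac2)
  then have "pE (br (u i) (br (u j) x)) = pE (br (br (u i) (u j)) x) + pE (br (u j) (br (u i) x))" by simp
  moreover have "pE (br (u i) (br (u j) x)) = J i (J j x)"
    by (subst u_br_decomp[OF j]) (simp add: J_def vc2)
  moreover have "pE (br (u j) (br (u i) x)) = J j (J i x)"
    by (subst u_br_decomp[OF i]) (simp add: J_def vc2)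
  moreover have "pE (br (br (u i) (u j)) x) = 0"
  proof -
    have "bE (u i) (u j) = K i j" by (simp add: K_def bE_def)
    then show ?thesis using bE_zero_h[OF K_E x, of i j] by (simp add: br_br_l bE_def[symmetric])
  qed
  ultimately show ?thesis by simp
qed

lemma jac_u: "br (u i) (br (u j) (u k)) + br (u j) (br (u k) (u i)) + br (u k) (br (u i) (u j)) = 0"
  by (rule jac)

lemma br_uK: "br (u i) (br (u j) (u k)) = br (u i) (K j k)"
  by (simp add: br_br_r K_def bE_def)

lemma JK: "J i (K j k) + J j (K k i) + J k (K i j) = 0"
proof -
  have "pE (br (u i) (br (u j) (u k)) + br (u j) (br (u k) (u i)) + br (u k) (br (u i) (u j))) = 0"
    using jac_u by simp
  then show ?thesis by (simp add: br_uK J_def)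
qed

lemma KK: "l < r \<Longrightarrow> B (K l i) (K j k) + B (K l j) (K k i) + B (K l k) (K i j) = 0"
proof -
  have h: "B (br (u i) (K j k)) (u l) = - B (K j k) (K i l)" for i j k
    using inv[of "u i" "K j k" "u l"] B_pE2[OF K_E, of j k "br (u i) (u l)"] by (simp add: K_def)
  have "B (br (u i) (br (u j) (u k)) + br (u j) (br (u k) (u i)) + br (u k) (br (u i) (u j))) (u l) = 0"
    using jac_u by simp
  then have "B (K j k) (K i l) + B (K k i) (K j l) + B (K i j) (K k l) = 0"
    by (simp add: br_uK h)
  moreover have "B (K l i) (K j k) = - B (K j k) (K i l)" using K_skew[of l i] Bsym by (metis B_simps(7))
  moreover have "B (K l j) (K k i) = - B (K k i) (K j l)" using K_skew[of l j] Bsym by (metis B_simps(7))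
  moreover have "B (K l k) (K i j) = - B (K i j) (K k l)" using K_skew[of l k] Bsym by (metis B_simps(7))
  ultimately show ?thesis by simp
qed

end


context hyp
begin

lemma final:
  shows "\<exists>(u::nat \<Rightarrow> 'a) (v::nat \<Rightarrow> 'a) (E::'a set)
           (K::nat \<Rightarrow> nat \<Rightarrow> 'a) (L::nat \<Rightarrow> nat \<Rightarrow> nat \<Rightarrow> real) (J::nat \<Rightarrow> 'a \<Rightarrow> 'a).
    (let r = form_index B; P = u ` {..<r} \<union> v ` {..<r} in
      \<comment> \<open>vector space decomposition\<close>
      independent P \<and> card P = 2 * r \<and>
      subspace E \<and> pos_definite_on B E \<and>
      span P \<inter> E = {0} \<and> (\<forall>x. \<exists>a\<in>span P. \<exists>e\<in>E. x = a + e) \<and>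
      \<comment> \<open>inner products\<close>
      (\<forall>i<r. \<forall>e\<in>E. B (u i) e = 0 \<and> B (v i) e = 0) \<and>
      (\<forall>i<r. \<forall>j<r. B (u i) (v j) = (if i = j then 1 else 0) \<and>
                    B (u i) (u j) = 0 \<and> B (v i) (v j) = 0) \<and>
      span (v ` {..<r}) = lie_centre br \<and>
      \<comment> \<open>structure data\<close>
      (\<forall>i<r. \<forall>j<r. K i j \<in> E \<and> K i j = - K j i) \<and>
      (\<forall>i<r. \<forall>j<r. \<forall>k<r. L i j k = - L j i k \<and> L i j k = - L i k j) \<and>
      (\<forall>i<r. linear (J i) \<and> (\<forall>x\<in>E. J i x \<in> E) \<and>
              (\<forall>x\<in>E. \<forall>y\<in>E. B (J i x) y = - B x (J i y))) \<and>
      \<comment> \<open>brackets\<close>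
      (\<forall>i<r. \<forall>j<r. br (u i) (u j) = K i j + (\<Sum>k<r. L i j k *\<^sub>R v k)) \<and>
      (\<forall>i<r. \<forall>x\<in>E. br (u i) x = J i x - (\<Sum>j<r. B (K i j) x *\<^sub>R v j)) \<and>
      (\<forall>x\<in>E. \<forall>y\<in>E. br x y = - (\<Sum>i<r. B x (J i y) *\<^sub>R v i)) \<and>
      (\<forall>i<r. \<forall>z. br (v i) z = 0) \<and>
      \<comment> \<open>identities\<close>
      (\<forall>i<r. \<forall>j<r. \<forall>x\<in>E. J i (J j x) - J j (J i x) = 0) \<and>
      (\<forall>i<r. \<forall>j<r. \<forall>k<r. J i (K j k) + J j (K k i) + J k (K i j) = 0) \<and>
      (\<forall>i<r. \<forall>j<r. \<forall>k<r. \<forall>l<r.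
         B (K l i) (K j k) + B (K l j) (K k i) + B (K l k) (K i j) = 0))"
  unfolding Let_def r_def[symmetric]
proof (rule exI[of _ u], rule exI[of _ v], rule exI[of _ E], rule exI[of _ K], rule exI[of _ L], rule exI[of _ J], intro conjI)
  show "independent (u ` {..<r} \<union> v ` {..<r})" by (rule P_indep)
  show "card (u ` {..<r} \<union> v ` {..<r}) = 2 * r" by (rule P_card)
  show "subspace E" by (rule subspace_E)
  show "pos_definite_on B E" by (rule posE)
  show "span (u ` {..<r} \<union> v ` {..<r}) \<inter> E = {0}" by (rule P_E)
  show "\<forall>x. \<exists>a\<in>span (u ` {..<r} \<union> v ` {..<r}). \<exists>e\<in>E. x = a + e" using P_decomp by blast
  show "\<forall>i<r. \<forall>e\<in>E. B (u i) e = 0 \<and> B (v i) e = 0" using E_orth by blast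
  show "\<forall>i<r. \<forall>j<r. B (u i) (v j) = (if i = j then 1 else 0) \<and> B (u i) (u j) = 0 \<and> B (v i) (v j) = 0"
    by (simp add: uv uu vv)
  show "span (v ` {..<r}) = lie_centre br" by (rule centre_eq[symmetric])
  show "\<forall>i<r. \<forall>j<r. K i j \<in> E \<and> K i j = - K j i" using K_E K_skew by blast
  show "\<forall>i<r. \<forall>j<r. \<forall>k<r. L i j k = - L j i k \<and> L i j k = - L i k j" using L_skew1 L_skew2 by blast
  show "\<forall>i<r. linear (J i) \<and> (\<forall>x\<in>E. J i x \<in> E) \<and> (\<forall>x\<in>E. \<forall>y\<in>E. B (J i x) y = - B x (J i y))"
    using lin_J J_E J_skew by blast
  show "\<forall>i<r. \<forall>j<r. br (u i) (u j) = K i j + (\<Sum>k<r. L i j k *\<^sub>R v k)" using br_uu by blast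
  show "\<forall>i<r. \<forall>x\<in>E. br (u i) x = J i x - (\<Sum>j<r. B (K i j) x *\<^sub>R v j)" using br_ux by blast
  show "\<forall>x\<in>E. \<forall>y\<in>E. br x y = - (\<Sum>i<r. B x (J i y) *\<^sub>R v i)" using br_xy by blast
  show "\<forall>i<r. \<forall>z. br (v i) z = 0" using vc by blast
  show "\<forall>i<r. \<forall>j<r. \<forall>x\<in>E. J i (J j x) - J j (J i x) = 0" using J_comm by blast
  show "\<forall>i<r. \<forall>j<r. \<forall>k<r. J i (K j k) + J j (K k i) + J k (K i j) = 0" using JK by blast
  show "\<forall>i<r. \<forall>j<r. \<forall>k<r. \<forall>l<r. B (K l i) (K j k) + B (K l j) (K k i) + B (K l k) (K i j) = 0"
    using KK by blast
qed

end

theorem mainTheorem1: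
  fixes br :: "'a::euclidean_space \<Rightarrow> 'a \<Rightarrow> 'a"
    and B :: "'a \<Rightarrow> 'a \<Rightarrow> real"
  assumes "metric_lie_algebra br B"
    and "indecomposable br B"
    and "form_index B > 0"
    and "\<exists>Z. max_isotropic_centre br B Z"
  shows "\<exists>(u::nat \<Rightarrow> 'a) (v::nat \<Rightarrow> 'a) (E::'a set)
           (K::nat \<Rightarrow> nat \<Rightarrow> 'a) (L::nat \<Rightarrow> nat \<Rightarrow> nat \<Rightarrow> real) (J::nat \<Rightarrow> 'a \<Rightarrow> 'a).
    (let r = form_index B; P = u ` {..<r} \<union> v ` {..<r} in
      \<comment> \<open>vector space decomposition\<close>
      independent P \<and> card P = 2 * r \<and>
      subspace E \<and> pos_definite_on B E \<and>
      span P \<inter> E = {0} \<and> (\<forall>x. \<exists>a\<in>span P. \<exists>e\<in>E. x = a + e) \<and>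
      \<comment> \<open>inner products\<close>
      (\<forall>i<r. \<forall>e\<in>E. B (u i) e = 0 \<and> B (v i) e = 0) \<and>
      (\<forall>i<r. \<forall>j<r. B (u i) (v j) = (if i = j then 1 else 0) \<and>
                    B (u i) (u j) = 0 \<and> B (v i) (v j) = 0) \<and>
      span (v ` {..<r}) = lie_centre br \<and>
      \<comment> \<open>structure data\<close>
      (\<forall>i<r. \<forall>j<r. K i j \<in> E \<and> K i j = - K j i) \<and>
      (\<forall>i<r. \<forall>j<r. \<forall>k<r. L i j k = - L j i k \<and> L i j k = - L i k j) \<and>
      (\<forall>i<r. linear (J i) \<and> (\<forall>x\<in>E. J i x \<in> E) \<and>
              (\<forall>x\<in>E. \<forall>y\<in>E. B (J i x) y = - B x (J i y))) \<and>
      \<comment> \<open>brackets\<close>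
      (\<forall>i<r. \<forall>j<r. br (u i) (u j) = K i j + (\<Sum>k<r. L i j k *\<^sub>R v k)) \<and>
      (\<forall>i<r. \<forall>x\<in>E. br (u i) x = J i x - (\<Sum>j<r. B (K i j) x *\<^sub>R v j)) \<and>
      (\<forall>x\<in>E. \<forall>y\<in>E. br x y = - (\<Sum>i<r. B x (J i y) *\<^sub>R v i)) \<and>
      (\<forall>i<r. \<forall>z. br (v i) z = 0) \<and>
      \<comment> \<open>identities\<close>
      (\<forall>i<r. \<forall>j<r. \<forall>x\<in>E. J i (J j x) - J j (J i x) = 0) \<and>
      (\<forall>i<r. \<forall>j<r. \<forall>k<r. J i (K j k) + J j (K k i) + J k (K i j) = 0) \<and>
      (\<forall>i<r. \<forall>j<r. \<forall>k<r. \<forall>l<r.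
         B (K l i) (K j k) + B (K l j) (K k i) + B (K l k) (K i j) = 0))"

proof -
  interpret m: mla br B by unfold_locales (rule assms(1))
  obtain Z where Z: "max_isotropic_centre br B Z" using assms(4) by blast
  then have Zs: "subspace Z" "Z \<subseteq> lie_centre br" "dim Z = form_index B" "\<forall>x\<in>Z. \<forall>y\<in>Z. B x y = 0"
    by (simp_all add: max_isotropic_centre_def)
  obtain b where b: "b \<subseteq> Z" "independent b" "Z \<subseteq> span b" "card b = dim Z"
    using basis_exists[of Z] by blast
  have "finite b" using b(2) by (simp add: independent_imp_finite)
  then obtain n :: nat and v :: "nat \<Rightarrow> 'a" where nv: "b = v ` {i. i < n}" "inj_on v {i. i < n}"
    using finite_imp_nat_seg_image_inj_on by blast
  have lt: "{i. i < n} = {..<n}" by auto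
  have n: "n = form_index B" using b(4) nv(1) card_image[OF nv(2)] Zs(3) by simp
  have inj: "inj_on v {..<n}" using nv(2) lt by simp
  have ind: "independent (v ` {..<n})" using b(2) nv(1) lt by simp
  have vZ: "v i \<in> Z" if "i < n" for i using b(1) nv(1) that by auto
  have iso: "\<forall>i<n. \<forall>j<n. B (v i) (v j) = 0" using Zs(4) vZ by blast
  obtain u where u: "\<forall>i<n. \<forall>j<n. B (u i) (v j) = (if i = j then 1 else 0) \<and> B (u i) (u j) = 0"
    using m.dual_family[OF inj ind iso] by blast
  have vc: "br (v i) x = 0" if "i < n" for i x
    using vZ[OF that] Zs(2) by (auto simp: lie_centre_def)
  interpret h: hyp br B "form_index B" u v
  proof unfold_locales
    show "form_index B = form_index B" by simp
    show "0 < form_index B" by (rule assms(3))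
    show "B (u i) (v j) = (if i = j then 1 else 0)" if "i < form_index B" "j < form_index B" for i j
      using u that n by simp
    show "B (u i) (u j) = 0" if "i < form_index B" "j < form_index B" for i j
      using u that n by simp
    show "B (v i) (v j) = 0" if "i < form_index B" "j < form_index B" for i j
      using iso that n by simp
    show "br (v i) x = 0" if "i < form_index B" for i x using vc that n by simp
    show "indecomposable br B" by (rule assms(2))
  qed
  show ?thesis by (rule h.final)
qed

end
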